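(* Let the attribute space be $\{1,\dots,d\}^m$ and let $p(\cdot\mid z)$ be an additive energy distribution for every $z\in\{1,\dots,d\}^m$. Suppose $\mathcal{Z}^{\mathsf{train}}$ (the support of the training prior $p(z)$) consists of $s$ attribute vectors drawn uniformly at random (with replacement) from $\{1,\dots,d\}^m$, and let $q(x,z)=q(z)q(x\mid z)$ be a test distribution with $q(x\mid z)=p(x\mid z)$ for all $z$ and with attribute support $\mathcal{Z}^{\mathsf{test}}=\{1,\dots,d\}^m$. Let $c>0$. Suppose $s\ge 2c(md+d\log d)$ with $d$ sufficiently large, that $\hat E,\hat B$ are such that the additive energy classifier satisfies $\hat p(z\mid x)=p(z\mid x)$ for all $z\in\mathcal{Z}^{\mathsf{train}}$ and $x\in\mathbb{R}^n$, and that $\hat q(z)=q(z)$ for all $z\in\{1,\dots,d\}^m$. Then, with probability greater than $1-\frac1c$ (over the random draw of $\mathcal{Z}^{\mathsf{train}}$), the CRM predictor satisfies $\hat q(z\mid x)=q(z\mid x)$ for all $z\in\{1,\dots,d\}^m$ and all $x\in\mathbb{R}^n$.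
   Context: $\sigma(z)\in\{0,1\}^{md}$ is the concatenation of one-hot encodings of $z_1,\dots,z_m$. An additive energy distribution (AED) family is $p(x\mid z)=\frac{1}{\mathbb{Z}(z)}\exp(-\langle\sigma(z),E(x)\rangle)$ for some $E:\mathbb{R}^n\to\mathbb{R}^{md}$, with $\mathbb{Z}(z)=\int\exp(-\langle\sigma(z),E(x)\rangle)dx<\infty$ and support $\mathbb{R}^n$. Given $\hat E:\mathbb{R}^n\to\mathbb{R}^{md}$ and $\hat B:\mathcal{Z}^{\mathsf{train}}\to\mathbb{R}$, the additive energy classifier is $\hat p(z\mid x)\propto\exp(-\langle\sigma(z),\hat E(x)\rangle+\log p(z)-\hat B(z))$, normalized over $z\in\mathcal{Z}^{\mathsf{train}}$. The extrapolated bias is $B^\star(z)=\log\mathbb{E}_{x\sim p(x)}\big[\exp(-\langle\sigma(z),\hat E(x)\rangle)/\sum_{\tilde z\in\mathcal{Z}^{\mathsf{train}}}\exp(-\langle\sigma(\tilde z),\hat E(x)\rangle+\log p(\tilde z)-\hat B(\tilde z))\big]$, with $p(x)$ the training marginal. Given a distribution $\hat q$ on attributes, the CRM predictor is $\hat q(z\mid x)\propto\exp(-\langle\sigma(z),\hat E(x)\rangle+\log\hat q(z)-B^\star(z))$, normalized over the support of $\hat q$. *)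

theory Defs
  imports "HOL-Probability.Probability"
begin

text \<open>Attribute vectors z in {1..d}^m are lists of length m with entries in {1..d}.
  Vectors in R^(md) are indexed by pairs (i,j) with i < m, j in {1..d}.\<close>

definition attrs :: "nat \<Rightarrow> nat \<Rightarrow> nat list set" where
  "attrs m d = {z. length z = m \<and> set z \<subseteq> {1..d}}"

definition sigma :: "nat list \<Rightarrow> nat \<times> nat \<Rightarrow> real" where
  "sigma z = (\<lambda>(i, j). if z ! i = j then 1 else 0)"

definition inner_md :: "nat \<Rightarrow> nat \<Rightarrow> (nat \<times> nat \<Rightarrow> real) \<Rightarrow> (nat \<times> nat \<Rightarrow> real) \<Rightarrow> real" where
  "inner_md m d u v = (\<Sum>ij\<in>{..<m} \<times> {1..d}. u ij * v ij)"

text \<open>Additive energy distribution family: Z(z) finite for every z (support is R^n automatically).\<close>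
definition AED_family :: "nat \<Rightarrow> nat \<Rightarrow> ('a::euclidean_space \<Rightarrow> nat \<times> nat \<Rightarrow> real) \<Rightarrow> bool" where
  "AED_family m d E \<longleftrightarrow>
     (\<forall>z\<in>attrs m d. integrable lborel (\<lambda>x. exp (- inner_md m d (sigma z) (E x))))"

definition partition_fn :: "nat \<Rightarrow> nat \<Rightarrow> ('a::euclidean_space \<Rightarrow> nat \<times> nat \<Rightarrow> real) \<Rightarrow> nat list \<Rightarrow> real" where
  "partition_fn m d E z = (\<integral>x. exp (- inner_md m d (sigma z) (E x)) \<partial>lborel)"

definition cond_dens :: "nat \<Rightarrow> nat \<Rightarrow> ('a::euclidean_space \<Rightarrow> nat \<times> nat \<Rightarrow> real) \<Rightarrow> nat list \<Rightarrow> 'a \<Rightarrow> real" where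
  "cond_dens m d E z x = exp (- inner_md m d (sigma z) (E x)) / partition_fn m d E z"

definition marginal :: "nat \<Rightarrow> nat \<Rightarrow> ('a::euclidean_space \<Rightarrow> nat \<times> nat \<Rightarrow> real) \<Rightarrow> nat list pmf \<Rightarrow> 'a \<Rightarrow> real" where
  "marginal m d E pz x = (\<Sum>z\<in>set_pmf pz. pmf pz z * cond_dens m d E z x)"

text \<open>Bayes posterior p(z | x) (also used for the test posterior q(z | x), since q(x|z) = p(x|z)).\<close>
definition posterior :: "nat \<Rightarrow> nat \<Rightarrow> ('a::euclidean_space \<Rightarrow> nat \<times> nat \<Rightarrow> real) \<Rightarrow> nat list pmf \<Rightarrow> nat list \<Rightarrow> 'a \<Rightarrow> real" where
  "posterior m d E pz z x = pmf pz z * cond_dens m d E z x / marginal m d E pz x"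

text \<open>Additive energy classifier hat p(z | x), normalized over Z^train = support of p(z).\<close>
definition aec_term :: "nat \<Rightarrow> nat \<Rightarrow> ('a \<Rightarrow> nat \<times> nat \<Rightarrow> real) \<Rightarrow> (nat list \<Rightarrow> real) \<Rightarrow> nat list pmf \<Rightarrow> nat list \<Rightarrow> 'a \<Rightarrow> real" where
  "aec_term m d Eh Bh pz z x = exp (- inner_md m d (sigma z) (Eh x) + ln (pmf pz z) - Bh z)"

definition aec :: "nat \<Rightarrow> nat \<Rightarrow> ('a \<Rightarrow> nat \<times> nat \<Rightarrow> real) \<Rightarrow> (nat list \<Rightarrow> real) \<Rightarrow> nat list pmf \<Rightarrow> nat list \<Rightarrow> 'a \<Rightarrow> real" where
  "aec m d Eh Bh pz z x = aec_term m d Eh Bh pz z x / (\<Sum>z'\<in>set_pmf pz. aec_term m d Eh Bh pz z' x)"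

text \<open>Extrapolated bias B*(z); the expectation over x ~ p(x) is the Lebesgue integral against the density p(x).\<close>
definition extrap_bias :: "nat \<Rightarrow> nat \<Rightarrow> ('a::euclidean_space \<Rightarrow> nat \<times> nat \<Rightarrow> real) \<Rightarrow> ('a \<Rightarrow> nat \<times> nat \<Rightarrow> real) \<Rightarrow> (nat list \<Rightarrow> real) \<Rightarrow> nat list pmf \<Rightarrow> nat list \<Rightarrow> real" where
  "extrap_bias m d E Eh Bh pz z =
     ln (\<integral>x. marginal m d E pz x *
              (exp (- inner_md m d (sigma z) (Eh x)) / (\<Sum>z'\<in>set_pmf pz. aec_term m d Eh Bh pz z' x)) \<partial>lborel)"

definition crm_term :: "nat \<Rightarrow> nat \<Rightarrow> ('a \<Rightarrow> nat \<times> nat \<Rightarrow> real) \<Rightarrow> (nat list \<Rightarrow> real) \<Rightarrow> nat list pmf \<Rightarrow> nat list \<Rightarrow> 'a \<Rightarrow> real" where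
  "crm_term m d Eh Bs qh z x = exp (- inner_md m d (sigma z) (Eh x) + ln (pmf qh z) - Bs z)"

definition crm :: "nat \<Rightarrow> nat \<Rightarrow> ('a \<Rightarrow> nat \<times> nat \<Rightarrow> real) \<Rightarrow> (nat list \<Rightarrow> real) \<Rightarrow> nat list pmf \<Rightarrow> nat list \<Rightarrow> 'a \<Rightarrow> real" where
  "crm m d Eh Bs qh z x = crm_term m d Eh Bs qh z x / (\<Sum>z'\<in>set_pmf qh. crm_term m d Eh Bs qh z' x)"

text \<open>Outcomes of s uniform draws with replacement from {1..d}^m.\<close>
definition draws :: "nat \<Rightarrow> nat \<Rightarrow> nat \<Rightarrow> nat list list set" where
  "draws m d s = {\<omega>. length \<omega> = s \<and> set \<omega> \<subseteq> attrs m d}"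

end

theory Submission
  imports Defs "HOL-Library.Function_Algebras" "HOL-Real_Asymp.Real_Asymp"
begin

lemma card_lists_nth:
  assumes "\<forall>j<n. finite (B j)"
  shows "card {z. length z = n \<and> (\<forall>j<n. z!j \<in> B j)} = (\<Prod>j<n. card (B j))"
  using assms
proof (induction n arbitrary: B)
  case 0
  then show ?case by simp
next
  case (Suc n)
  have eq: "{z. length z = Suc n \<and> (\<forall>j<Suc n. z!j \<in> B j)} =
     (\<lambda>(a,z'). a#z') ` (B 0 \<times> {z'. length z' = n \<and> (\<forall>j<n. z'!j \<in> B (Suc j))})"
  proof (rule set_eqI, rule iffI)
    fix z assume "z \<in> {z. length z = Suc n \<and> (\<forall>j<Suc n. z!j \<in> B j)}"
    then have z: "length z = Suc n" "\<forall>j<Suc n. z!j \<in> B j" by auto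
    then obtain a z' where "z = a # z'" by (cases z) auto
    with z show "z \<in> (\<lambda>(a,z'). a#z') ` (B 0 \<times> {z'. length z' = n \<and> (\<forall>j<n. z'!j \<in> B (Suc j))})"
      by (auto intro!: image_eqI[where x="(a,z')"])
  next
    fix z assume "z \<in> (\<lambda>(a,z'). a#z') ` (B 0 \<times> {z'. length z' = n \<and> (\<forall>j<n. z'!j \<in> B (Suc j))})"
    then show "z \<in> {z. length z = Suc n \<and> (\<forall>j<Suc n. z!j \<in> B j)}"
      by (auto simp: nth_Cons split: nat.splits)
  qed
  have inj: "inj (\<lambda>(a::'a,z'). a#z')" by (auto simp: inj_def)
  have IH: "card {z'. length z' = n \<and> (\<forall>j<n. z'!j \<in> B (Suc j))} = (\<Prod>j<n. card (B (Suc j)))"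
    using Suc.prems by (intro Suc.IH) auto
  show ?case
    unfolding eq card_image[OF inj_on_subset[OF inj subset_UNIV]] card_cartesian_product IH
    by (simp only: prod.lessThan_Suc_shift)
qed

lemma attrs_nth: "attrs m d = {z. length z = m \<and> (\<forall>j<m. z!j \<in> {1..d})}"
  by (auto simp: attrs_def set_conv_nth)

lemma card_attrs_fix:
  assumes "J \<subseteq> {..<m}" "\<forall>j\<in>J. g j \<in> {1..d}"
  shows "card {z\<in>attrs m d. \<forall>j\<in>J. z!j = g j} = d ^ (m - card J)"
proof -
  let ?B = "\<lambda>j. if j \<in> J then {g j} else {1..d}"
  have "{z\<in>attrs m d. \<forall>j\<in>J. z!j = g j} = {z. length z = m \<and> (\<forall>j<m. z!j \<in> ?B j)}"
    using assms unfolding attrs_nth by auto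
  then have "card {z\<in>attrs m d. \<forall>j\<in>J. z!j = g j} = (\<Prod>j<m. card (?B j))"
    using card_lists_nth[of m ?B] by simp
  also have "\<dots> = (\<Prod>j\<in>{..<m}-J. d)"
  proof -
    have fin: "finite {..<m}" by simp
    have "(\<Prod>j<m. card (?B j)) = (\<Prod>j\<in>{..<m}\<inter>J. card (?B j)) * (\<Prod>j\<in>{..<m}-J. card (?B j))"
      using prod.Int_Diff[OF fin] by blast
    also have "\<dots> = (\<Prod>j\<in>{..<m}-J. d)" by simp
    finally show ?thesis .
  qed
  also have "\<dots> = d ^ (m - card J)"
    using assms(1) by (simp add: card_Diff_subset finite_subset)
  finally show ?thesis .
qed

lemma card_attrs: "card (attrs m d) = d ^ m"
  using card_attrs_fix[of "{}" m] by simp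

lemma finite_attrs: "finite (attrs m d)"
proof -
  have "attrs m d \<subseteq> {z. set z \<subseteq> {1..d} \<and> length z = m}" by (auto simp: attrs_def)
  then show ?thesis using finite_lists_length_eq[of "{1..d}" m] finite_subset by auto
qed

lemma finite_draws: "finite (draws m d s)"
proof -
  have "draws m d s = {xs. set xs \<subseteq> attrs m d \<and> length xs = s}" by (auto simp: draws_def)
  then show ?thesis using finite_lists_length_eq[OF finite_attrs] by simp
qed

lemma card_draws_P:
  "card {\<omega>\<in>draws m d s. \<forall>z\<in>set \<omega>. P z} = card {z\<in>attrs m d. P z} ^ s"
proof -
  have "{\<omega>\<in>draws m d s. \<forall>z\<in>set \<omega>. P z} = {xs. set xs \<subseteq> {z\<in>attrs m d. P z} \<and> length xs = s}"
    by (auto simp: draws_def)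
  then show ?thesis using card_lists_length_eq[of "{z\<in>attrs m d. P z}" s] finite_attrs by simp
qed

lemma card_draws: "card (draws m d s) = (d ^ m) ^ s"
  using card_draws_P[of m d s "\<lambda>_. True"] by (simp add: card_attrs)

lemma seq_count:
  assumes U: "finite U" "\<And>j p. A j p \<subseteq> U"
    and b: "\<And>j p. j < n \<Longrightarrow> real (card (A j p)) \<le> b j"
  shows "real (card {w. length w = n \<and> (\<forall>j<n. w!j \<in> A j (take j w))}) \<le> (\<Prod>j<n. b j)"
  using b
proof (induction n)
  case 0
  have "{w. length w = 0 \<and> (\<forall>j<0. w!j \<in> A j (take j w))} = {[]}" by auto
  then show ?case by simp
next
  case (Suc n)
  let ?C = "\<lambda>n. {w. length w = n \<and> (\<forall>j<n. w!j \<in> A j (take j w))}"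
  have finC: "finite (?C n)" for n
    by (rule finite_subset[OF _ finite_lists_length_eq[OF U(1), of n]])
       (use U(2) in \<open>auto simp: set_conv_nth\<close>)
  have finA: "finite (A j p)" for j p using U finite_subset by blast
  have eq: "?C (Suc n) = (\<lambda>(w,x). w @ [x]) ` (SIGMA w:?C n. A n w)"
  proof (rule set_eqI, rule iffI)
    fix w assume "w \<in> ?C (Suc n)"
    then have w: "length w = Suc n" "\<forall>j<Suc n. w!j \<in> A j (take j w)" by auto
    then obtain u x where ux: "w = u @ [x]" by (metis length_Suc_conv_rev)
    with w have lu: "length u = n" by simp
    have "\<forall>j<n. u!j \<in> A j (take j u)"
    proof (intro allI impI)
      fix j assume "j < n"
      then have "w!j \<in> A j (take j w)" using w by simp
      then show "u!j \<in> A j (take j u)" using \<open>j<n\<close> lu ux by (simp add: nth_append)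
    qed
    moreover have "x \<in> A n u" using w(2)[rule_format, of n] ux lu by (simp add: nth_append)
    ultimately show "w \<in> (\<lambda>(w,x). w @ [x]) ` (SIGMA w:?C n. A n w)"
      using lu ux by (auto intro!: image_eqI[where x="(u,x)"])
  next
    fix w assume "w \<in> (\<lambda>(w,x). w @ [x]) ` (SIGMA w:?C n. A n w)"
    then obtain u x where u: "length u = n" "\<forall>j<n. u!j \<in> A j (take j u)" "x \<in> A n u" "w = u @ [x]"
      by auto
    show "w \<in> ?C (Suc n)"
    proof -
      have "\<forall>j<Suc n. w!j \<in> A j (take j w)"
      proof (intro allI impI)
        fix j assume j: "j < Suc n"
        show "w!j \<in> A j (take j w)"
        proof (cases "j < n")
          case True then show ?thesis using u by (simp add: nth_append)
        next
          case False then have "j = n" using j by simp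
          then show ?thesis using u by (simp add: nth_append)
        qed
      qed
      then show ?thesis using u by simp
    qed
  qed
  have "card (?C (Suc n)) \<le> card (SIGMA w:?C n. A n w)"
    unfolding eq by (rule card_image_le) (use finC finA in \<open>auto intro!: finite_SigmaI\<close>)
  also have "\<dots> = (\<Sum>w\<in>?C n. card (A n w))"
    by (rule card_SigmaI) (use finC finA in auto)
  finally have "real (card (?C (Suc n))) \<le> (\<Sum>w\<in>?C n. real (card (A n w)))"
    by (simp flip: of_nat_sum)
  also have "\<dots> \<le> (\<Sum>w\<in>?C n. b n)" by (intro sum_mono) (use Suc.prems in auto)
  also have "\<dots> = real (card (?C n)) * b n" by simp
  also have "\<dots> \<le> (\<Prod>j<n. b j) * b n"
  proof (rule mult_right_mono)
    show "real (card (?C n)) \<le> (\<Prod>j<n. b j)" using Suc by auto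
    have "0 \<le> real (card (A n [])) " by simp
    then show "0 \<le> b n" using Suc.prems[of n "[]"] by linarith
  qed
  finally show ?case by simp
qed

lemma subset_binomial:
  fixes x y :: real
  assumes "finite A"
  shows "(\<Sum>R\<in>Pow A. x ^ card R * y ^ (card A - card R)) = (x + y) ^ card A"
  using assms
proof (induction A rule: finite_induct)
  case empty then show ?case by simp
next
  case (insert a A)
  have P: "Pow (insert a A) = Pow A \<union> insert a ` Pow A" by (rule Pow_insert)
  have disj: "Pow A \<inter> insert a ` Pow A = {}" using insert by auto
  have inj: "inj_on (insert a) (Pow A)" unfolding inj_on_def proof (intro ballI impI)
    fix X Y assume "X \<in> Pow A" "Y \<in> Pow A" "insert a X = insert a Y"
    then show "X = Y" using insert(2) by (metis Pow_iff insert_ident subset_iff)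
  qed
  have fin: "finite (Pow A)" using insert by simp
  have c1: "R \<in> Pow A \<Longrightarrow> card (insert a R) = Suc (card R)" for R
    using insert by (metis PowD card_insert_disjoint finite_subset subsetD)
  have c2: "R \<in> Pow A \<Longrightarrow> card R \<le> card A" for R
    using insert by (auto intro: card_mono)
  have "(\<Sum>R\<in>Pow (insert a A). x ^ card R * y ^ (card (insert a A) - card R))
      = (\<Sum>R\<in>Pow A. x ^ card R * y ^ (Suc (card A) - card R))
        + (\<Sum>R\<in>insert a ` Pow A. x ^ card R * y ^ (Suc (card A) - card R))"
    unfolding P using insert fin disj by (simp add: sum.union_disjoint)
  also have "(\<Sum>R\<in>insert a ` Pow A. x ^ card R * y ^ (Suc (card A) - card R))
      = (\<Sum>R\<in>Pow A. x ^ Suc (card R) * y ^ (Suc (card A) - Suc (card R)))"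
    by (subst sum.reindex[OF inj]) (auto intro!: sum.cong simp: c1)
  also have "\<dots> = x * (\<Sum>R\<in>Pow A. x ^ card R * y ^ (card A - card R))"
    by (simp add: sum_distrib_left mult.assoc)
  also have "(\<Sum>R\<in>Pow A. x ^ card R * y ^ (Suc (card A) - card R))
      = y * (\<Sum>R\<in>Pow A. x ^ card R * y ^ (card A - card R))"
    unfolding sum_distrib_left by (rule sum.cong) (auto simp: Suc_diff_le[OF c2])
  finally show ?case using insert by (simp add: algebra_simps)
qed

definition fscale :: "real \<Rightarrow> (nat \<times> nat \<Rightarrow> real) \<Rightarrow> (nat \<times> nat \<Rightarrow> real)" where
  "fscale r f = (\<lambda>x. r * f x)"

interpretation fv: vector_space fscale
  by unfold_locales (auto simp: fscale_def plus_fun_def algebra_simps)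

definition shat :: "nat \<Rightarrow> nat \<Rightarrow> nat list \<Rightarrow> nat \<times> nat \<Rightarrow> real" where
  "shat m d z = (\<lambda>p. if p \<in> {..<m} \<times> {1..d} then sigma z p else if p = (m,0) then 1 else 0)"

definition Lf :: "nat \<Rightarrow> nat \<Rightarrow> (nat \<times> nat \<Rightarrow> real) \<Rightarrow> real \<Rightarrow> (nat \<times> nat \<Rightarrow> real) \<Rightarrow> real" where
  "Lf m d v t u = (\<Sum>p\<in>{..<m} \<times> {1..d}. u p * v p) + u (m,0) * t"

lemma Lf_shat: "Lf m d v t (shat m d z) = inner_md m d (sigma z) v + t"
  unfolding Lf_def shat_def inner_md_def by auto

lemma Lf_zero: "Lf m d v t 0 = 0" by (simp add: Lf_def)

lemma Lf_lin: "Lf m d v t (fscale c x + y) = c * Lf m d v t x + Lf m d v t y"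
  by (simp add: Lf_def fscale_def algebra_simps sum.distrib sum_distrib_left)

lemma span_Lzero:
  assumes "u \<in> fv.span X" "\<forall>x\<in>X. Lf m d v t x = 0"
  shows "Lf m d v t u = 0"
  using assms(1)
proof (induction rule: fv.span_induct_alt)
  case base then show ?case by (rule Lf_zero)
next
  case (step c x y)
  have "Lf m d v t (fscale c x + y) = c * Lf m d v t x + Lf m d v t y" by (rule Lf_lin)
  then show ?case using step assms(2) unfolding plus_fun_def by simp
qed

lemma indep_seq:
  fixes u :: "nat \<Rightarrow> nat \<times> nat \<Rightarrow> real"
  assumes "\<forall>j\<in>R. u j \<notin> fv.span (u ` {l\<in>R. l < j})"
  shows "fv.independent (u ` (R \<inter> {..<n})) \<and> inj_on u (R \<inter> {..<n})"
proof (induction n)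
  case 0
  have e: "R \<inter> {..<0::nat} = {}" by simp
  show ?case unfolding e image_empty using fv.independent_empty by blast
next
  case (Suc n)
  show ?case
  proof (cases "n \<in> R")
    case False
    then have "R \<inter> {..<Suc n} = R \<inter> {..<n}" by (auto simp: less_Suc_eq)
    then show ?thesis using Suc by simp
  next
    case True
    have eq: "R \<inter> {..<Suc n} = insert n (R \<inter> {..<n})" using True by (auto simp: less_Suc_eq)
    have e2: "{l\<in>R. l < n} = R \<inter> {..<n}" by auto
    have "u n \<notin> fv.span (u ` {l\<in>R. l < n})" using bspec[OF assms True] .
    then have ns: "u n \<notin> fv.span (u ` (R \<inter> {..<n}))" unfolding e2 .
    then have nin: "u n \<notin> u ` (R \<inter> {..<n})" by (metis fv.span_base)
    have i1: "fv.independent (u ` (R \<inter> {..<n}))" and i2: "inj_on u (R \<inter> {..<n})" using Suc by auto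
    have "fv.independent (insert (u n) (u ` (R \<inter> {..<n})))"
      using fv.independent_insertI[OF ns i1] .
    moreover have "inj_on u (insert n (R \<inter> {..<n}))" using i2 nin by simp
    ultimately show ?thesis unfolding eq by simp
  qed
qed

lemma span_basis:
  assumes "finite P0" "\<forall>q. q \<notin> P0 \<longrightarrow> x q = 0"
  shows "x \<in> fv.span ((\<lambda>p. (\<lambda>q. if q = p then 1 else 0)) ` P0)"
proof -
  let ?e = "\<lambda>p. (\<lambda>q. if q = p then (1::real) else 0)"
  have sum_app: "(\<Sum>p\<in>A. fscale (x p) (?e p)) q = (if q \<in> A then x q else 0)" if "finite A" for A q
    using that
  proof (induction A rule: finite_induct)
    case empty then show ?case by simp
  next
    case (insert a A)
    then show ?case by (simp add: fscale_def)
  qed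
  have "x = (\<Sum>p\<in>P0. fscale (x p) (?e p))"
  proof
    fix q
    show "x q = (\<Sum>p\<in>P0. fscale (x p) (?e p)) q"
      unfolding sum_app[OF assms(1)] using assms(2) by (cases q) auto
  qed
  also have "\<dots> \<in> fv.span (?e ` P0)"
    by (intro fv.span_sum fv.span_scale fv.span_base) auto
  finally show ?thesis .
qed

definition succ :: "nat \<Rightarrow> nat \<Rightarrow> nat list list \<Rightarrow> nat set" where
  "succ m d w = {j. j < length w \<and> shat m d (w!j) \<notin> fv.span (shat m d ` set (take j w))}"

lemma card_succ: "card (succ m d w) \<le> m * d + 1"
proof -
  let ?R = "succ m d w"
  let ?u = "\<lambda>j. shat m d (w!j)"
  have fin: "finite ?R" unfolding succ_def by auto
  have hyp: "\<forall>j\<in>?R. ?u j \<notin> fv.span (?u ` {l\<in>?R. l < j})"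
  proof
    fix j assume j: "j \<in> ?R"
    have "?u ` {l\<in>?R. l < j} \<subseteq> shat m d ` set (take j w)"
    proof
      fix y assume "y \<in> ?u ` {l\<in>?R. l < j}"
      then obtain l where l: "l \<in> ?R" "l < j" "y = ?u l" by auto
      then have "w!l \<in> set (take j w)" using j
        by (auto simp: succ_def in_set_conv_nth intro!: exI[of _ l])
      then show "y \<in> shat m d ` set (take j w)" using l by auto
    qed
    then show "?u j \<notin> fv.span (?u ` {l\<in>?R. l < j})"
      using j fv.span_mono unfolding succ_def by blast
  qed
  have Rn: "?R \<inter> {..<length w} = ?R" unfolding succ_def by auto
  from indep_seq[OF hyp, of "length w"] Rn
  have ind: "fv.independent (?u ` ?R)" and inj: "inj_on ?u ?R" by auto
  let ?P0 = "{..<m} \<times> {1..d} \<union> {(m,0)}"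
  let ?B0 = "(\<lambda>p. (\<lambda>q. if q = p then (1::real) else 0)) ` ?P0"
  have sub: "?u ` ?R \<subseteq> fv.span ?B0"
    by (intro image_subsetI span_basis) (auto simp: shat_def)
  have "card (?u ` ?R) \<le> card ?B0"
    using fv.independent_span_bound[OF _ ind sub] by simp
  also have "\<dots> \<le> card ?P0" by (rule card_image_le) simp
  also have "\<dots> \<le> m * d + 1" by (simp add: card_insert_if)
  finally show ?thesis using card_image[OF inj] by simp
qed

lemma inner_sigma:
  assumes "z \<in> attrs m d"
  shows "inner_md m d (sigma z) v = (\<Sum>i<m. v (i, z!i))"
proof -
  have zi: "i < m \<Longrightarrow> z!i \<in> {1..d}" for i using assms unfolding attrs_nth by auto
  have "inner_md m d (sigma z) v = (\<Sum>i<m. \<Sum>j\<in>{1..d}. (if z!i = j then 1 else 0) * v (i,j))"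
    unfolding inner_md_def sigma_def by (auto simp: sum.cartesian_product intro!: sum.cong)
  also have "\<dots> = (\<Sum>i<m. v (i, z!i))"
  proof (rule sum.cong[OF refl])
    fix i assume "i \<in> {..<m}"
    then have "z!i \<in> {1..d}" using zi by simp
    then show "(\<Sum>j\<in>{1..d}. (if z!i = j then 1 else 0) * v (i,j)) = v (i, z!i)"
    proof -
      have "(\<Sum>j\<in>{1..d}. (if z!i = j then 1 else 0) * v (i,j)) = (\<Sum>j\<in>{1..d}. if z!i = j then v (i,j) else 0)"
        by (rule sum.cong) auto
      also have "\<dots> = v (i, z!i)" using \<open>z!i \<in> {1..d}\<close> by (simp add: sum.delta)
      finally show ?thesis .
    qed
  qed
  finally show ?thesis .
qed

lemma sum_update:
  fixes v :: "nat \<times> nat \<Rightarrow> real"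
  assumes "length z = m" "i < m"
  shows "(\<Sum>j<m. v (j, (z[i:=a])!j)) = (\<Sum>j<m. v (j, z!j)) - v (i, z!i) + v (i, a)"
proof -
  have fin: "finite {..<m}" by simp
  have "(\<Sum>j<m. v (j, (z[i:=a])!j)) = v (i, (z[i:=a])!i) + (\<Sum>j\<in>{..<m}-{i}. v (j, (z[i:=a])!j))"
    by (rule sum.remove) (use assms in simp_all)
  also have "v (i, (z[i:=a])!i) = v (i, a)" using assms by simp
  also have "(\<Sum>j\<in>{..<m}-{i}. v (j, (z[i:=a])!j)) = (\<Sum>j\<in>{..<m}-{i}. v (j, z!j))"
    by (rule sum.cong) auto
  also have "\<dots> = (\<Sum>j<m. v (j, z!j)) - v (i, z!i)"
    using sum.remove[OF fin, of i "\<lambda>j. v (j, z!j)"] assms by simp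
  finally show ?thesis by simp
qed

definition Zset :: "nat \<Rightarrow> nat \<Rightarrow> (nat \<times> nat \<Rightarrow> real) \<Rightarrow> real \<Rightarrow> nat list set" where
  "Zset m d v t = {z\<in>attrs m d. inner_md m d (sigma z) v + t = 0}"

lemma fiber_bound:
  assumes "i < m" "d \<ge> 1" "\<And>c. card {a\<in>{1..d}. v (i,a) = c} \<le> L"
  shows "card (Zset m d v t) \<le> L * d ^ (m - 1)"
proof -
  let ?Z = "Zset m d v t"
  let ?phi = "\<lambda>z::nat list. z[i := 1]"
  let ?Y = "?phi ` ?Z"
  have finZ: "finite ?Z" unfolding Zset_def using finite_attrs by simp
  have Ysub: "?Y \<subseteq> {y\<in>attrs m d. \<forall>j\<in>{i}. y!j = 1}"
    using assms(1,2) by (auto simp: Zset_def attrs_nth nth_list_update)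
  have cardY: "card ?Y \<le> d ^ (m - 1)"
  proof -
    have "card ?Y \<le> card {y\<in>attrs m d. \<forall>j\<in>{i}. y!j = 1}"
      by (rule card_mono[OF _ Ysub]) (simp add: finite_attrs)
    also have "\<dots> = d ^ (m - card {i})"
      by (rule card_attrs_fix) (use assms in auto)
    finally show ?thesis by simp
  qed
  have fib: "card {z\<in>?Z. ?phi z = y} \<le> L" if y: "y \<in> ?Y" for y
  proof -
    let ?c = "v (i, 1) - (inner_md m d (sigma y) v + t)"
    have yat: "y \<in> attrs m d" using y Ysub by auto
    have yi: "y!i = 1" using y Ysub by auto
    have "{z\<in>?Z. ?phi z = y} \<subseteq> (\<lambda>a. y[i:=a]) ` {a\<in>{1..d}. v (i,a) = ?c}"
    proof
      fix z assume z: "z \<in> {z\<in>?Z. ?phi z = y}"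
      then have zat: "z \<in> attrs m d" and z0: "inner_md m d (sigma z) v + t = 0" and zy: "z[i:=1] = y"
        by (auto simp: Zset_def)
      have lz: "length z = m" and zi: "z!i \<in> {1..d}" using zat assms(1) by (auto simp: attrs_nth)
      have zeq: "z = y[i := z!i]" using zy by auto
      have "inner_md m d (sigma z) v = (\<Sum>j<m. v (j, (y[i:=z!i])!j))"
        using inner_sigma[OF zat] zeq by simp
      also have "\<dots> = (\<Sum>j<m. v (j, y!j)) - v (i, y!i) + v (i, z!i)"
        by (rule sum_update) (use yat assms in \<open>auto simp: attrs_def\<close>)
      finally have "v (i, z!i) = ?c" using z0 inner_sigma[OF yat] yi by simp
      then show "z \<in> (\<lambda>a. y[i:=a]) ` {a\<in>{1..d}. v (i,a) = ?c}"
        using zi zeq by auto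
    qed
    then have "card {z\<in>?Z. ?phi z = y} \<le> card ((\<lambda>a. y[i:=a]) ` {a\<in>{1..d}. v (i,a) = ?c})"
      by (rule card_mono[rotated]) simp
    also have "\<dots> \<le> card {a\<in>{1..d}. v (i,a) = ?c}" by (rule card_image_le) simp
    also have "\<dots> \<le> L" by (rule assms(3))
    finally show ?thesis .
  qed
  have "?Z = (\<Union>y\<in>?Y. {z\<in>?Z. ?phi z = y})" by auto
  then have "card ?Z = card (\<Union>y\<in>?Y. {z\<in>?Z. ?phi z = y})" by simp
  also have "\<dots> \<le> (\<Sum>y\<in>?Y. card {z\<in>?Z. ?phi z = y})"
    by (rule card_UN_le) (use finZ in simp)
  also have "\<dots> \<le> (\<Sum>y\<in>?Y. L)" by (rule sum_mono) (rule fib)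
  also have "\<dots> = card ?Y * L" by simp
  also have "\<dots> \<le> d ^ (m - 1) * L" by (rule mult_right_mono[OF cardY]) simp
  finally show ?thesis by (simp add: mult.commute)
qed

definition Good :: "nat \<Rightarrow> nat \<Rightarrow> nat list set \<Rightarrow> bool" where
  "Good m d T \<longleftrightarrow> (\<forall>v t. (\<forall>z\<in>T. inner_md m d (sigma z) v + t = 0) \<longrightarrow>
      (\<forall>z\<in>attrs m d. inner_md m d (sigma z) v + t = 0))"

definition hits :: "nat \<Rightarrow> (nat \<times> nat) set \<Rightarrow> nat list \<Rightarrow> bool" where
  "hits m S z \<longleftrightarrow> (\<exists>i<m. (i, z!i) \<in> S)"

definition once :: "nat \<Rightarrow> (nat \<times> nat) set \<Rightarrow> nat list \<Rightarrow> bool" where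
  "once m S z \<longleftrightarrow> (\<exists>i<m. (i, z!i) \<in> S \<and> (\<forall>j<m. j \<noteq> i \<longrightarrow> (j, z!j) \<notin> S))"

lemma bad_cases:
  assumes m: "m \<ge> 1" and d: "d \<ge> 1" and T: "T \<subseteq> attrs m d" and ng: "\<not> Good m d T"
  shows "(\<exists>S. S \<subseteq> {..<m} \<times> {1..d} \<and> 4 * card S \<le> d \<and> (\<forall>z\<in>T. hits m S z))
       \<or> (\<exists>S. S \<subseteq> {..<m} \<times> {1..d} \<and> S \<noteq> {} \<and> 4 * card S \<le> d \<and> (\<forall>z\<in>T. \<not> once m S z))
       \<or> (\<exists>v t. (\<forall>z\<in>T. inner_md m d (sigma z) v + t = 0) \<and>
              real (card (Zset m d v t)) \<le> (1 - 1 / (4 * real m)) * real d ^ m)"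
proof -
  from ng obtain v t z0 where vt: "\<forall>z\<in>T. inner_md m d (sigma z) v + t = 0"
    and z0: "z0 \<in> attrs m d" "inner_md m d (sigma z0) v + t \<noteq> 0"
    unfolding Good_def by blast
  show ?thesis
  proof (cases "real (card (Zset m d v t)) \<le> (1 - 1 / (4 * real m)) * real d ^ m")
    case True
    have "\<exists>v t. (\<forall>z\<in>T. inner_md m d (sigma z) v + t = 0) \<and>
              real (card (Zset m d v t)) \<le> (1 - 1 / (4 * real m)) * real d ^ m"
      using vt True by (intro exI[of _ v] exI[of _ t]) simp
    then show ?thesis by (intro disjI2)
  next
    case False
    then have big: "real (card (Zset m d v t)) > (1 - 1 / (4 * real m)) * real d ^ m" by simp
    have ex_c: "\<exists>c. 4 * real m * real (card {a\<in>{1..d}. v (i,a) \<noteq> c}) < real d" if i: "i < m" for i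
    proof -
      let ?lev = "\<lambda>c. card {a\<in>{1..d}. v (i,a) = c}"
      let ?V = "(\<lambda>a. v (i,a)) ` {1..d}"
      define L where "L = Max (?lev ` ?V)"
      have finV: "finite ?V" by simp
      have neV: "?V \<noteq> {}" using d by auto
      have levL: "?lev c \<le> L" for c
      proof (cases "c \<in> ?V")
        case True then show ?thesis unfolding L_def by (intro Max_ge) auto
      next
        case False
        then have "{a\<in>{1..d}. v (i,a) = c} = {}" by auto
        then show ?thesis by (metis card.empty le0)
      qed
      have "L \<in> ?lev ` ?V" unfolding L_def by (rule Max_in) (use finV neV in auto)
      then obtain c where c: "c \<in> ?V" "?lev c = L" by auto
      have "card (Zset m d v t) \<le> L * d ^ (m - 1)"
        by (rule fiber_bound[OF i d levL])
      then have "real (card (Zset m d v t)) \<le> real (L * d ^ (m - 1))" by (simp only: of_nat_le_iff)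
      then have "real (card (Zset m d v t)) \<le> real L * real d ^ (m - 1)" by simp
      then have "(1 - 1 / (4 * real m)) * real d ^ m < real L * real d ^ (m - 1)"
        using big by linarith
      moreover have "real d ^ m = real d * real d ^ (m - 1)"
        using m by (cases m) auto
      ultimately have "((1 - 1 / (4 * real m)) * real d) * real d ^ (m - 1) < real L * real d ^ (m - 1)"
        by (simp add: mult.assoc)
      then have Lbig: "(1 - 1 / (4 * real m)) * real d < real L"
        by (rule mult_right_less_imp_less) simp
      have split: "card {a\<in>{1..d}. v (i,a) \<noteq> c} + card {a\<in>{1..d}. v (i,a) = c} = d"
      proof -
        have U: "{a\<in>{1..d}. v (i,a) \<noteq> c} \<union> {a\<in>{1..d}. v (i,a) = c} = {1..d}" by auto
        have "card ({a\<in>{1..d}. v (i,a) \<noteq> c} \<union> {a\<in>{1..d}. v (i,a) = c})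
           = card {a\<in>{1..d}. v (i,a) \<noteq> c} + card {a\<in>{1..d}. v (i,a) = c}"
          by (rule card_Un_disjoint) auto
        then show ?thesis unfolding U by simp
      qed
      then have "real (card {a\<in>{1..d}. v (i,a) \<noteq> c}) = real d - real L" using c by simp
      moreover have "(1 - 1/(4*real m)) * real d = real d - real d / (4 * real m)" by (simp add: algebra_simps)
      ultimately have X: "real (card {a\<in>{1..d}. v (i,a) \<noteq> c}) < real d / (4 * real m)"
        using Lbig by linarith
      have pm: "0 < 4 * real m" using m by simp
      have "real (card {a\<in>{1..d}. v (i,a) \<noteq> c}) * (4 * real m) < real d"
        using X pm by (simp add: pos_less_divide_eq)
      then show ?thesis by (intro exI[of _ c]) (simp add: mult.commute)
    qed
    then have "\<forall>i\<in>{..<m}. \<exists>c. 4 * real m * real (card {a\<in>{1..d}. v (i,a) \<noteq> c}) < real d" by blast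
    from bchoice[OF this] obtain c where c0: "\<forall>i\<in>{..<m}. 4 * real m * real (card {a\<in>{1..d}. v (i,a) \<noteq> c i}) < real d"
      by (elim exE)
    have c: "\<And>i. i < m \<Longrightarrow> 4 * real m * real (card {a\<in>{1..d}. v (i,a) \<noteq> c i}) < real d"
      using c0 by simp
    define S where "S = Sigma {..<m} (\<lambda>i. {a\<in>{1..d}. v (i,a) \<noteq> c i})"
    have Ssub: "S \<subseteq> {..<m} \<times> {1..d}" unfolding S_def by auto
    have cardS: "card S = (\<Sum>i<m. card {a\<in>{1..d}. v (i,a) \<noteq> c i})"
      unfolding S_def by (rule card_SigmaI) auto
    have "4 * real m * real (card S) = (\<Sum>i<m. 4 * real m * real (card {a\<in>{1..d}. v (i,a) \<noteq> c i}))"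
      unfolding cardS by (simp add: sum_distrib_left)
    also have "\<dots> \<le> (\<Sum>i<m. real d)" by (rule sum_mono) (use c in \<open>auto intro: less_imp_le\<close>)
    also have "\<dots> = real m * real d" by simp
    finally have "4 * real (card S) \<le> real d" using m by (simp add: mult.assoc)
    then have S4: "4 * card S \<le> d" by linarith
    define t' where "t' = t + (\<Sum>i<m. c i)"
    have rep: "inner_md m d (sigma z) v + t = (\<Sum>i<m. v (i, z!i) - c i) + t'" if "z \<in> attrs m d" for z
      unfolding inner_sigma[OF that] t'_def by (simp add: sum_subtractf)
    have inS: "(i, z!i) \<in> S \<longleftrightarrow> v (i, z!i) - c i \<noteq> 0" if "z \<in> attrs m d" "i < m" for z i
      using that unfolding S_def attrs_nth by auto
    show ?thesis
    proof (cases "t' = 0")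
      case False
      have "\<forall>z\<in>T. hits m S z"
      proof
        fix z assume zT: "z \<in> T"
        then have za: "z \<in> attrs m d" using T by auto
        show "hits m S z"
        proof (rule ccontr)
          assume "\<not> hits m S z"
          then have "\<forall>i<m. v (i, z!i) - c i = 0" using inS[OF za] unfolding hits_def by auto
          then have "(\<Sum>i<m. v (i, z!i) - c i) = 0" by simp
          then show False using rep[OF za] vt zT False by simp
        qed
      qed
      then show ?thesis using Ssub S4 by (intro disjI1 exI[of _ S]) simp
    next
      case True
      have Sne: "S \<noteq> {}"
      proof
        assume "S = {}"
        then have "\<forall>i<m. v (i, z0!i) - c i = 0" using inS[OF z0(1)] by auto
        then have "(\<Sum>i<m. v (i, z0!i) - c i) = 0" by simp
        then show False using rep[OF z0(1)] z0(2) True by simp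
      qed
      have "\<forall>z\<in>T. \<not> once m S z"
      proof (intro ballI notI)
        fix z assume zT: "z \<in> T" and on: "once m S z"
        then have za: "z \<in> attrs m d" using T by auto
        from on obtain i where i: "i < m" "(i, z!i) \<in> S" "\<forall>j<m. j \<noteq> i \<longrightarrow> (j, z!j) \<notin> S"
          unfolding once_def by blast
        have fin: "finite {..<m}" by simp
        have "(\<Sum>j<m. v (j, z!j) - c j) = (v (i, z!i) - c i) + (\<Sum>j\<in>{..<m}-{i}. v (j, z!j) - c j)"
          by (rule sum.remove) (use i in simp_all)
        also have "(\<Sum>j\<in>{..<m}-{i}. v (j, z!j) - c j) = 0"
          by (rule sum.neutral) (use i inS[OF za] in auto)
        finally have "(\<Sum>j<m. v (j, z!j) - c j) \<noteq> 0" using inS[OF za i(1)] i(2) by simp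
        then show False using rep[OF za] vt zT True by simp
      qed
      then have "\<exists>S. S \<subseteq> {..<m} \<times> {1..d} \<and> S \<noteq> {} \<and> 4 * card S \<le> d \<and> (\<forall>z\<in>T. \<not> once m S z)"
        using Ssub S4 Sne by (intro exI[of _ S]) simp
      then show ?thesis by (intro disjI2 disjI1)
    qed
  qed
qed

lemma card_fix1:
  assumes "i < m" "a \<in> {1..d}"
  shows "card {z\<in>attrs m d. z!i = a} = d ^ (m - 1)"
  using card_attrs_fix[of "{i}" m "\<lambda>_. a" d] assms by simp

lemma card_fix2:
  assumes "i < m" "j < m" "i \<noteq> j" "a \<in> {1..d}" "b \<in> {1..d}"
  shows "real (card {z\<in>attrs m d. z!i = a \<and> z!j = b}) = real d ^ m / real d ^ 2"
proof -
  have "{z\<in>attrs m d. z!i = a \<and> z!j = b} = {z\<in>attrs m d. \<forall>l\<in>{i,j}. z!l = (if l = i then a else b)}"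
    using assms by auto
  also have "card \<dots> = d ^ (m - card {i,j})"
    by (rule card_attrs_fix) (use assms in auto)
  also have "card {i,j} = 2" using assms by simp
  finally have c: "card {z\<in>attrs m d. z!i = a \<and> z!j = b} = d ^ (m - 2)" .
  have m2: "m \<ge> 2" using assms by linarith
  have d0: "d > 0" using assms by auto
  have "real d ^ m = real d ^ (m - 2) * real d ^ 2"
  proof -
    have "m = (m - 2) + 2" using m2 by simp
    then have "real d ^ m = real d ^ ((m - 2) + 2)" by (metis)
    then show ?thesis by (simp only: power_add)
  qed
  then show ?thesis unfolding c using d0 by simp
qed

lemma card_hits:
  assumes "S \<subseteq> {..<m} \<times> {1..d}"
  shows "real (card {z\<in>attrs m d. hits m S z}) \<le> real (card S) * real d ^ (m - 1)"
proof -
  have finS: "finite S" using assms finite_subset by blast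
  have "{z\<in>attrs m d. hits m S z} = (\<Union>p\<in>S. {z\<in>attrs m d. z!(fst p) = snd p})"
    using assms unfolding hits_def by force
  then have "card {z\<in>attrs m d. hits m S z} \<le> (\<Sum>p\<in>S. card {z\<in>attrs m d. z!(fst p) = snd p})"
    using card_UN_le[OF finS, of "\<lambda>p. {z\<in>attrs m d. z!(fst p) = snd p}"] by simp
  also have "\<dots> = (\<Sum>p\<in>S. d ^ (m - 1))"
  proof (rule sum.cong[OF refl])
    fix p assume "p \<in> S"
    then show "card {z\<in>attrs m d. z!(fst p) = snd p} = d ^ (m - 1)"
      using assms by (intro card_fix1) auto
  qed
  also have "\<dots> = card S * d ^ (m - 1)" by simp
  finally show ?thesis by (metis of_nat_le_iff of_nat_mult of_nat_power)
qed

lemma card_once: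
  assumes S: "S \<subseteq> {..<m} \<times> {1..d}" and d: "d \<ge> 1" and m: "m \<ge> 1"
  shows "real (card {z\<in>attrs m d. once m S z})
     \<ge> real (card S) * (real d ^ m / real d - real (card S) * real d ^ m / real d ^ 2)"
proof -
  have finS: "finite S" using S finite_subset by blast
  define E where "E p = {z\<in>attrs m d. z!(fst p) = snd p \<and> (\<forall>j<m. j \<noteq> fst p \<longrightarrow> (j, z!j) \<notin> S)}" for p
  have finE: "finite (E p)" for p unfolding E_def using finite_attrs by simp
  have sub: "(\<Union>p\<in>S. E p) \<subseteq> {z\<in>attrs m d. once m S z}"
    using S unfolding E_def once_def by force
  have disj: "E p \<inter> E q = {}" if "p \<in> S" "q \<in> S" "p \<noteq> q" for p q
  proof -
    obtain i a where p: "p = (i,a)" by force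
    obtain j b where q: "q = (j,b)" by force
    have "i < m" "j < m" using that S p q by auto
    show ?thesis
    proof (cases "i = j")
      case True then have "a \<noteq> b" using that p q by auto
      then show ?thesis unfolding E_def p q True by auto
    next
      case False
      show ?thesis unfolding E_def p q using False that p q \<open>j < m\<close> by auto
    qed
  qed
  have Ebound: "real (card (E p)) \<ge> real d ^ m / real d - real (card S) * real d ^ m / real d ^ 2"
    if pS: "p \<in> S" for p
  proof -
    obtain i a where p: "p = (i,a)" by force
    have ia: "i < m" "a \<in> {1..d}" using pS S p by auto
    let ?S' = "{q\<in>S. fst q \<noteq> i}"
    have finS': "finite ?S'" using finS by simp
    let ?P = "\<lambda>q. {z\<in>attrs m d. z!i = a \<and> z!(fst q) = snd q}"
    have cover: "{z\<in>attrs m d. z!i = a} \<subseteq> E p \<union> (\<Union>q\<in>?S'. ?P q)"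
      unfolding E_def p by force
    have "card {z\<in>attrs m d. z!i = a} \<le> card (E p \<union> (\<Union>q\<in>?S'. ?P q))"
      by (rule card_mono[OF _ cover]) (use finE finite_attrs finS' in auto)
    also have "\<dots> \<le> card (E p) + card (\<Union>q\<in>?S'. ?P q)" by (rule card_Un_le)
    also have "card (\<Union>q\<in>?S'. ?P q) \<le> (\<Sum>q\<in>?S'. card (?P q))" by (rule card_UN_le[OF finS'])
    finally have "real (card {z\<in>attrs m d. z!i = a}) \<le> real (card (E p)) + (\<Sum>q\<in>?S'. real (card (?P q)))"
      by (simp flip: of_nat_sum of_nat_add)
    also have "(\<Sum>q\<in>?S'. real (card (?P q))) = (\<Sum>q\<in>?S'. real d ^ m / real d ^ 2)"
    proof (rule sum.cong[OF refl])
      fix q assume "q \<in> ?S'"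
      then show "real (card (?P q)) = real d ^ m / real d ^ 2"
        using S ia by (intro card_fix2) auto
    qed
    also have "\<dots> = real (card ?S') * (real d ^ m / real d ^ 2)" by simp
    also have "\<dots> \<le> real (card S) * (real d ^ m / real d ^ 2)"
      by (rule mult_right_mono) (use finS in \<open>auto intro: card_mono\<close>)
    finally have A: "real (card {z\<in>attrs m d. z!i = a}) \<le> real (card (E p)) + real (card S) * real d ^ m / real d ^ 2"
      by simp
    have "real (card {z\<in>attrs m d. z!i = a}) = real d ^ (m - 1)" using card_fix1[OF ia] by simp
    also have "\<dots> = real d ^ m / real d" using m d by (cases m) auto
    finally show ?thesis using A by linarith
  qed
  have "(\<Sum>p\<in>S. real d ^ m / real d - real (card S) * real d ^ m / real d ^ 2) \<le> (\<Sum>p\<in>S. real (card (E p)))"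
    by (rule sum_mono) (rule Ebound)
  also have "\<dots> = real (card (\<Union>p\<in>S. E p))"
    by (subst card_UN_disjoint) (use finS finE disj in auto)
  also have "\<dots> \<le> real (card {z\<in>attrs m d. once m S z})"
    by (simp only: of_nat_le_iff) (rule card_mono[OF _ sub], simp add: finite_attrs)
  finally show ?thesis by simp
qed

definition Aset :: "nat \<Rightarrow> nat \<Rightarrow> nat set \<Rightarrow> nat \<Rightarrow> nat list list \<Rightarrow> nat list set" where
  "Aset m d R j p = (if j \<in> R then attrs m d
     else if (\<exists>v t. (\<forall>z\<in>set p. inner_md m d (sigma z) v + t = 0) \<and>
                 real (card (Zset m d v t)) \<le> (1 - 1 / (4 * real m)) * real d ^ m)
     then {z\<in>attrs m d. shat m d z \<in> fv.span (shat m d ` set p)} else {})"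

definition Cset :: "nat \<Rightarrow> nat \<Rightarrow> nat \<Rightarrow> nat set \<Rightarrow> nat list list set" where
  "Cset m d s R = {w. length w = s \<and> (\<forall>j<s. w!j \<in> Aset m d R j (take j w))}"

lemma span_sub_Zset:
  assumes "\<forall>z\<in>set p. inner_md m d (sigma z) v + t = 0"
  shows "{z\<in>attrs m d. shat m d z \<in> fv.span (shat m d ` set p)} \<subseteq> Zset m d v t"
proof
  fix z assume z: "z \<in> {z\<in>attrs m d. shat m d z \<in> fv.span (shat m d ` set p)}"
  have "\<forall>x\<in>shat m d ` set p. Lf m d v t x = 0" using assms by (auto simp: Lf_shat)
  moreover have "shat m d z \<in> fv.span (shat m d ` set p)" using z by simp
  ultimately have "Lf m d v t (shat m d z) = 0" by (intro span_Lzero) 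
  then show "z \<in> Zset m d v t" using z by (simp add: Lf_shat Zset_def)
qed

lemma card_Cset:
  assumes m: "m \<ge> 1" and R: "R \<subseteq> {..<s}"
  shows "real (card (Cset m d s R)) \<le> (real d ^ m) ^ card R * ((1 - 1 / (4 * real m)) * real d ^ m) ^ (s - card R)"
proof -
  let ?q = "1 - 1 / (4 * real m)"
  let ?M = "real d ^ m"
  let ?b = "\<lambda>j. if j \<in> R then ?M else ?q * ?M"
  have q0: "0 \<le> ?q" using m by (simp add: field_simps)
  have bnd: "real (card (Aset m d R j p)) \<le> ?b j" for j p
  proof (cases "j \<in> R")
    case True then show ?thesis by (simp add: Aset_def card_attrs)
  next
    case False
    show ?thesis
    proof (cases "\<exists>v t. (\<forall>z\<in>set p. inner_md m d (sigma z) v + t = 0) \<and>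
                 real (card (Zset m d v t)) \<le> ?q * ?M")
      case True
      then obtain v t where vt: "\<forall>z\<in>set p. inner_md m d (sigma z) v + t = 0"
        "real (card (Zset m d v t)) \<le> ?q * ?M" by (elim exE conjE) 
      have "card {z\<in>attrs m d. shat m d z \<in> fv.span (shat m d ` set p)} \<le> card (Zset m d v t)"
        by (rule card_mono[OF _ span_sub_Zset[OF vt(1)]]) (simp add: Zset_def finite_attrs)
      then have "real (card {z\<in>attrs m d. shat m d z \<in> fv.span (shat m d ` set p)}) \<le> ?q * ?M"
        using vt(2) by linarith
      then show ?thesis using False True unfolding Aset_def by simp
    next
      case False2: False
      have "0 \<le> ?q * ?M" using q0 by simp
      have "Aset m d R j p = {}" using False False2 unfolding Aset_def by auto
      then show ?thesis using \<open>0 \<le> ?q * ?M\<close> False by simp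
    qed
  qed
  have "real (card (Cset m d s R)) \<le> (\<Prod>j<s. ?b j)"
  proof -
    have sub: "Aset m d R j p \<subseteq> attrs m d" for j p by (auto simp: Aset_def)
    show ?thesis unfolding Cset_def by (rule seq_count[OF finite_attrs sub bnd])
  qed
  also have "(\<Prod>j<s. ?b j) = ?M ^ card R * (?q * ?M) ^ (s - card R)"
  proof -
    have "(\<Prod>j<s. ?b j) = (\<Prod>j\<in>{..<s} \<inter> {x. x \<in> R}. ?M) * (\<Prod>j\<in>{..<s} \<inter> - {x. x \<in> R}. ?q * ?M)"
      by (rule prod.If_cases) simp
    also have "{..<s} \<inter> {x. x \<in> R} = R" using R by auto
    also have "{..<s} \<inter> - {x. x \<in> R} = {..<s} - R" by auto
    finally have e: "(\<Prod>j<s. ?b j) = (\<Prod>j\<in>R. ?M) * (\<Prod>j\<in>{..<s} - R. ?q * ?M)" .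
    have "card ({..<s} - R) = s - card R" using R by (simp add: card_Diff_subset finite_subset)
    then show ?thesis unfolding e by simp
  qed
  finally show ?thesis .
qed

lemma cover_C:
  assumes w: "w \<in> draws m d s"
    and vt: "\<forall>z\<in>set w. inner_md m d (sigma z) v + t = 0"
    "real (card (Zset m d v t)) \<le> (1 - 1 / (4 * real m)) * real d ^ m"
  shows "w \<in> Cset m d s (succ m d w)" "succ m d w \<subseteq> {..<s}" "card (succ m d w) \<le> m * d + 1"
proof -
  have lw: "length w = s" and sw: "set w \<subseteq> attrs m d" using w by (auto simp: draws_def)
  show "succ m d w \<subseteq> {..<s}" using lw by (auto simp: succ_def)
  show "card (succ m d w) \<le> m * d + 1" by (rule card_succ)
  have "w!j \<in> Aset m d (succ m d w) j (take j w)" if j: "j < s" for j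
  proof (cases "j \<in> succ m d w")
    case True
    then show ?thesis using sw j lw by (auto simp: Aset_def)
  next
    case False
    then have sp: "shat m d (w!j) \<in> fv.span (shat m d ` set (take j w))"
      using j lw by (simp add: succ_def)
    have "\<forall>z\<in>set (take j w). inner_md m d (sigma z) v + t = 0"
      using vt(1) set_take_subset[of j w] by (simp add: subset_iff)
    then have ex: "\<exists>v t. (\<forall>z\<in>set (take j w). inner_md m d (sigma z) v + t = 0) \<and>
                 real (card (Zset m d v t)) \<le> (1 - 1 / (4 * real m)) * real d ^ m"
      using vt(2) by (intro exI[of _ v] exI[of _ t] conjI)
    have "w!j \<in> attrs m d" using sw j lw by auto
    then show ?thesis using False sp ex unfolding Aset_def by simp
  qed
  then show "w \<in> Cset m d s (succ m d w)" using lw by (simp add: Cset_def)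
qed

lemma Cset_sub_draws: "Cset m d s R \<subseteq> draws m d s"
proof
  fix w assume w: "w \<in> Cset m d s R"
  then have l: "length w = s" and a: "\<forall>j<s. w!j \<in> Aset m d R j (take j w)" by (auto simp: Cset_def)
  have "\<forall>j<s. w!j \<in> attrs m d"
  proof (intro allI impI)
    fix j assume "j < s"
    then have "w!j \<in> Aset m d R j (take j w)" using a by simp
    then show "w!j \<in> attrs m d" by (auto simp: Aset_def split: if_splits)
  qed
  then show "w \<in> draws m d s" using l by (auto simp: draws_def set_conv_nth)
qed

lemma bound_A:
  assumes m: "m \<ge> 1" and d: "d \<ge> 1" and s: "s \<ge> m * d"
  shows "real (card (\<Union>S\<in>{S. S \<subseteq> {..<m} \<times> {1..d} \<and> 4 * card S \<le> d}.
            {w\<in>draws m d s. \<forall>z\<in>set w. hits m S z}))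
       \<le> (real d ^ m) ^ s * (1/2) ^ (m * d)"
proof -
  let ?I = "{..<m} \<times> {1..d}"
  let ?SA = "{S. S \<subseteq> ?I \<and> 4 * card S \<le> d}"
  let ?M = "real d ^ m"
  have finSA: "finite ?SA" by (rule finite_subset[of _ "Pow ?I"]) auto
  have per: "real (card {w\<in>draws m d s. \<forall>z\<in>set w. hits m S z}) \<le> (?M / 4) ^ s" if "S \<in> ?SA" for S
  proof -
    have S: "S \<subseteq> ?I" "4 * card S \<le> d" using that by auto
    have "real (card {z\<in>attrs m d. hits m S z}) \<le> real (card S) * real d ^ (m - 1)"
      by (rule card_hits[OF S(1)])
    also have "\<dots> \<le> (real d / 4) * real d ^ (m - 1)"
      using S(2) by (intro mult_right_mono) auto
    also have "\<dots> = ?M / 4" using m by (cases m) auto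
    finally have "real (card {z\<in>attrs m d. hits m S z}) \<le> ?M / 4" .
    then have "real (card {z\<in>attrs m d. hits m S z}) ^ s \<le> (?M / 4) ^ s"
      by (intro power_mono) auto
    then show ?thesis by (simp add: card_draws_P)
  qed
  have "real (card (\<Union>S\<in>?SA. {w\<in>draws m d s. \<forall>z\<in>set w. hits m S z}))
      \<le> real (\<Sum>S\<in>?SA. card {w\<in>draws m d s. \<forall>z\<in>set w. hits m S z})"
    by (simp only: of_nat_le_iff) (rule card_UN_le[OF finSA])
  also have "\<dots> = (\<Sum>S\<in>?SA. real (card {w\<in>draws m d s. \<forall>z\<in>set w. hits m S z}))" by simp
  also have "\<dots> \<le> (\<Sum>S\<in>?SA. (?M / 4) ^ s)" by (rule sum_mono) (rule per)
  also have "\<dots> = real (card ?SA) * (?M / 4) ^ s" by simp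
  also have "\<dots> \<le> real (card (Pow ?I)) * (?M / 4) ^ s"
    by (intro mult_right_mono) (auto intro!: card_mono)
  also have "real (card (Pow ?I)) = 2 ^ (m * d)" by (simp add: card_Pow card_cartesian_product)
  also have "(2::real) ^ (m * d) * (?M / 4) ^ s = ?M ^ s * (2 ^ (m * d) / 4 ^ s)"
    by (simp add: power_divide)
  also have "2 ^ (m * d) / 4 ^ s \<le> (2::real) ^ (m * d) / 4 ^ (m * d)"
    using s by (intro divide_left_mono power_increasing) auto
  also have "(2::real) ^ (m * d) / 4 ^ (m * d) = (1/2) ^ (m * d)"
    by (simp add: power_divide[symmetric])
  finally show ?thesis by (simp add: mult_left_mono)
qed

lemma exp_bound_B:
  fixes k :: nat and d s :: nat
  assumes d: "d \<ge> 2" and k: "4 * k \<le> d" and s: "real s \<ge> 2 * real d * ln (real d)"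
  shows "(1 - 3 * real k / (4 * real d)) ^ s \<le> (real d powr (-3/2)) ^ k"
proof -
  have dpos: "real d > 0" using d by simp
  have a0: "0 \<le> 1 - 3 * real k / (4 * real d)" using k dpos by (simp add: field_simps)
  have "(1 - 3 * real k / (4 * real d)) ^ s \<le> exp (- (3 * real k / (4 * real d))) ^ s"
    by (intro power_mono a0) (metis exp_ge_add_one_self add.commute diff_conv_add_uminus)
  also have "\<dots> = exp (- (3 * real k / (4 * real d)) * real s)" by (simp add: exp_of_nat_mult[symmetric] mult.commute)
  also have "\<dots> \<le> exp (- (3 * real k / (4 * real d)) * (2 * real d * ln (real d)))"
  proof -
    have "0 \<le> 3 * real k / (4 * real d)" using dpos by simp
    then have "(3 * real k / (4 * real d)) * (2 * real d * ln (real d)) \<le> (3 * real k / (4 * real d)) * real s"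
      by (rule mult_left_mono[OF s])
    then show ?thesis by simp
  qed
  also have "- (3 * real k / (4 * real d)) * (2 * real d * ln (real d)) = real k * (ln (real d) * (-3/2))"
    using dpos by (simp add: field_simps)
  also have "exp (real k * (ln (real d) * (-3/2))) = exp (ln (real d) * (-3/2)) ^ k"
    by (simp add: exp_of_nat_mult[symmetric])
  also have "exp (ln (real d) * (-3/2)) = real d powr (-3/2)"
    using dpos by (simp add: powr_def)
  finally show ?thesis .
qed

lemma bound_B:
  assumes m: "m \<ge> 1" and d: "d \<ge> 2" and s: "real s \<ge> 2 * real d * ln (real d)"
  shows "real (card (\<Union>S\<in>{S. S \<subseteq> {..<m} \<times> {1..d} \<and> S \<noteq> {} \<and> 4 * card S \<le> d}.
            {w\<in>draws m d s. \<forall>z\<in>set w. \<not> once m S z}))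
       \<le> (real d ^ m) ^ s * ((1 + real d powr (-3/2)) ^ (m * d) - 1)"
proof -
  let ?I = "{..<m} \<times> {1..d}"
  let ?SB = "{S. S \<subseteq> ?I \<and> S \<noteq> {} \<and> 4 * card S \<le> d}"
  let ?M = "real d ^ m"
  let ?x = "real d powr (-3/2)"
  have dpos: "real d > 0" using d by simp
  have finI: "finite ?I" by simp
  have finSB: "finite ?SB" by (rule finite_subset[of _ "Pow ?I"]) auto
  have per: "real (card {w\<in>draws m d s. \<forall>z\<in>set w. \<not> once m S z}) \<le> ?M ^ s * ?x ^ card S"
    if "S \<in> ?SB" for S
  proof -
    have S: "S \<subseteq> ?I" "4 * card S \<le> d" using that by auto
    let ?k = "real (card S)"
    have once: "real (card {z\<in>attrs m d. once m S z}) \<ge> ?k * (?M / real d - ?k * ?M / real d ^ 2)"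
      by (rule card_once[OF S(1)]) (use m d in auto)
    have eq: "{z\<in>attrs m d. \<not> once m S z} = attrs m d - {z\<in>attrs m d. once m S z}" by auto
    have "real (card {z\<in>attrs m d. \<not> once m S z}) = ?M - real (card {z\<in>attrs m d. once m S z})"
    proof -
      have le: "card {z\<in>attrs m d. once m S z} \<le> card (attrs m d)" by (rule card_mono) (auto simp: finite_attrs)
      have "card (attrs m d - {z\<in>attrs m d. once m S z}) = card (attrs m d) - card {z\<in>attrs m d. once m S z}"
        by (rule card_Diff_subset) (auto simp: finite_attrs)
      then show ?thesis unfolding eq using le by (simp add: of_nat_diff card_attrs)
    qed
    also have "\<dots> \<le> ?M - ?k * (?M / real d - ?k * ?M / real d ^ 2)" using once by linarith
    also have "\<dots> = ?M * (1 - ?k / real d + ?k * ?k / real d ^ 2)"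
      using dpos by (simp add: field_simps power2_eq_square)
    also have "\<dots> \<le> ?M * (1 - 3 * ?k / (4 * real d))"
    proof (rule mult_left_mono)
      have "4 * ?k \<le> real d" using S(2) by linarith
      then have "?k * (4 * ?k) \<le> ?k * real d" by (intro mult_left_mono) auto
      then have "?k * ?k / real d ^ 2 \<le> ?k / (4 * real d)"
        using dpos by (simp add: field_simps power2_eq_square)
      then show "1 - ?k / real d + ?k * ?k / real d ^ 2 \<le> 1 - 3 * ?k / (4 * real d)"
        using dpos by (simp add: field_simps)
    qed simp
    finally have c: "real (card {z\<in>attrs m d. \<not> once m S z}) \<le> ?M * (1 - 3 * ?k / (4 * real d))" .
    have "real (card {w\<in>draws m d s. \<forall>z\<in>set w. \<not> once m S z})
          = real (card {z\<in>attrs m d. \<not> once m S z}) ^ s" by (simp add: card_draws_P)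
    also have "\<dots> \<le> (?M * (1 - 3 * ?k / (4 * real d))) ^ s" by (intro power_mono c) simp
    also have "\<dots> = ?M ^ s * (1 - 3 * ?k / (4 * real d)) ^ s" by (simp add: power_mult_distrib)
    also have "\<dots> \<le> ?M ^ s * ?x ^ card S"
      by (intro mult_left_mono exp_bound_B[OF d S(2) s]) simp
    finally show ?thesis .
  qed
  have "real (card (\<Union>S\<in>?SB. {w\<in>draws m d s. \<forall>z\<in>set w. \<not> once m S z}))
      \<le> real (\<Sum>S\<in>?SB. card {w\<in>draws m d s. \<forall>z\<in>set w. \<not> once m S z})"
    by (simp only: of_nat_le_iff) (rule card_UN_le[OF finSB])
  also have "\<dots> = (\<Sum>S\<in>?SB. real (card {w\<in>draws m d s. \<forall>z\<in>set w. \<not> once m S z}))" by simp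
  also have "\<dots> \<le> (\<Sum>S\<in>?SB. ?M ^ s * ?x ^ card S)" by (rule sum_mono) (rule per)
  also have "\<dots> \<le> (\<Sum>S\<in>Pow ?I - {{}}. ?M ^ s * ?x ^ card S)"
    by (rule sum_mono2) auto
  also have "\<dots> = ?M ^ s * (\<Sum>S\<in>Pow ?I - {{}}. ?x ^ card S)" by (simp add: sum_distrib_left)
  also have "(\<Sum>S\<in>Pow ?I - {{}}. ?x ^ card S) = (\<Sum>S\<in>Pow ?I. ?x ^ card S) - 1"
    by (subst sum_diff1) auto
  also have "(\<Sum>S\<in>Pow ?I. ?x ^ card S) = (?x + 1) ^ card ?I"
    using subset_binomial[OF finI, of ?x 1] by simp
  also have "card ?I = m * d" by (simp add: card_cartesian_product)
  finally show ?thesis by (simp add: add.commute)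
qed

lemma bound_C:
  assumes m: "m \<ge> 1"
  shows "real (card (\<Union>R\<in>{R. R \<subseteq> {..<s} \<and> card R \<le> m * d + 1}. Cset m d s R))
       \<le> (real d ^ m) ^ s * ((8 * real m) ^ (m * d + 1) * (1 - 1 / (8 * real m)) ^ s)"
proof -
  let ?RR = "{R. R \<subseteq> {..<s} \<and> card R \<le> m * d + 1}"
  let ?M = "real d ^ m"
  let ?q = "1 - 1 / (4 * real m)"
  let ?l = "8 * real m"
  let ?N = "m * d + 1"
  have l1: "?l \<ge> 1" using m by simp
  have q0: "?q \<ge> 0" using m by (simp add: field_simps)
  have finRR: "finite ?RR" by (rule finite_subset[of _ "Pow {..<s}"]) auto
  have per: "real (card (Cset m d s R)) \<le> ?M ^ s * (?l ^ ?N * ((1 / ?l) ^ card R * ?q ^ (s - card R)))"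
    if R: "R \<in> ?RR" for R
  proof -
    have Rs: "R \<subseteq> {..<s}" and RN: "card R \<le> ?N" using R by auto
    have cRs: "card R \<le> s" using card_mono[OF _ Rs] by simp
    have "real (card (Cset m d s R)) \<le> ?M ^ card R * (?q * ?M) ^ (s - card R)"
      by (rule card_Cset[OF m Rs])
    also have "\<dots> = ?M ^ (card R + (s - card R)) * ?q ^ (s - card R)"
      by (simp add: power_mult_distrib power_add)
    also have "card R + (s - card R) = s" using cRs by simp
    also have "?q ^ (s - card R) \<le> ?l ^ ?N * ((1 / ?l) ^ card R * ?q ^ (s - card R))"
    proof -
      have "?l ^ ?N * (1 / ?l) ^ card R = ?l ^ (?N - card R)"
      proof -
        have "?N = (?N - card R) + card R" using RN by simp
        then have "?l ^ ?N = ?l ^ ((?N - card R) + card R)" by metis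
        then have "?l ^ ?N = ?l ^ (?N - card R) * ?l ^ card R" by (simp only: power_add)
        then show ?thesis using l1 by (simp add: power_one_over field_simps)
      qed
      moreover have "?l ^ (?N - card R) \<ge> 1" using l1 by (rule one_le_power)
      ultimately have "1 \<le> ?l ^ ?N * (1 / ?l) ^ card R" by simp
      then have "1 * ?q ^ (s - card R) \<le> (?l ^ ?N * (1 / ?l) ^ card R) * ?q ^ (s - card R)"
        by (intro mult_right_mono) (use q0 in auto)
      then show ?thesis by (simp add: mult.assoc)
    qed
    then have "?M ^ s * ?q ^ (s - card R) \<le> ?M ^ s * (?l ^ ?N * ((1 / ?l) ^ card R * ?q ^ (s - card R)))"
      by (intro mult_left_mono) auto
    finally show ?thesis .
  qed
  have "real (card (\<Union>R\<in>?RR. Cset m d s R)) \<le> real (\<Sum>R\<in>?RR. card (Cset m d s R))"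
    by (simp only: of_nat_le_iff) (rule card_UN_le[OF finRR])
  also have "\<dots> = (\<Sum>R\<in>?RR. real (card (Cset m d s R)))" by simp
  also have "\<dots> \<le> (\<Sum>R\<in>?RR. ?M ^ s * (?l ^ ?N * ((1 / ?l) ^ card R * ?q ^ (s - card R))))"
    by (rule sum_mono) (rule per)
  also have "\<dots> \<le> (\<Sum>R\<in>Pow {..<s}. ?M ^ s * (?l ^ ?N * ((1 / ?l) ^ card R * ?q ^ (s - card R))))"
    by (rule sum_mono2) (use q0 l1 in auto)
  also have "\<dots> = ?M ^ s * (?l ^ ?N * (\<Sum>R\<in>Pow {..<s}. (1 / ?l) ^ card R * ?q ^ (card {..<s} - card R)))"
    by (simp add: sum_distrib_left)
  also have "(\<Sum>R\<in>Pow {..<s}. (1 / ?l) ^ card R * ?q ^ (card {..<s} - card R)) = (1 / ?l + ?q) ^ card {..<s}"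
    by (rule subset_binomial) simp
  also have "1 / ?l + ?q = 1 - 1 / (8 * real m)" using m by (simp add: field_simps)
  finally show ?thesis by simp
qed

lemma partition_pos:
  fixes E :: "'a::euclidean_space \<Rightarrow> nat \<times> nat \<Rightarrow> real"
  assumes "AED_family m d E" "z \<in> attrs m d"
  shows "partition_fn m d E z > 0"
proof -
  let ?f = "\<lambda>x. exp (- inner_md m d (sigma z) (E x))"
  have int: "integrable lborel ?f" using assms unfolding AED_family_def by blast
  have nn: "partition_fn m d E z \<ge> 0" unfolding partition_fn_def by (rule integral_nonneg_AE) simp
  have "partition_fn m d E z \<noteq> 0"
  proof
    assume "partition_fn m d E z = 0"
    then have "AE x in lborel. ?f x = 0"
      unfolding partition_fn_def using integral_nonneg_eq_0_iff_AE[OF int] by simp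
    then obtain N where N: "{x \<in> space lborel. \<not> ?f x = 0} \<subseteq> N" "emeasure lborel N = 0" "N \<in> sets lborel"
      by (rule AE_E)
    then have "UNIV \<subseteq> N" by auto
    then have "emeasure lborel (UNIV::'a set) \<le> emeasure lborel N"
      using N(3) by (intro emeasure_mono) auto
    then show False using N(2) by simp
  qed
  then show ?thesis using nn by simp
qed

lemma inner_diff:
  "inner_md m d u (\<lambda>p. a p - b p) = inner_md m d u a - inner_md m d u b"
  unfolding inner_md_def by (simp add: algebra_simps sum_subtractf)

lemma set_pmf_qh:
  assumes q: "set_pmf q = A" "finite A" and h: "\<forall>z\<in>A. pmf qh z = pmf q z"
  shows "set_pmf qh = A"
proof -
  have "(\<Sum>z\<in>A. pmf qh z) = 1" using h sum_pmf_eq_1[of A q] q by simp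
  then have "measure_pmf.prob qh A = 1"
    using measure_measure_pmf_finite[OF q(2), of qh] by simp
  then have "AE x in measure_pmf qh. x \<in> A" by (subst (asm) measure_pmf.prob_eq_1) auto
  then have sub: "set_pmf qh \<subseteq> A" by (auto simp: AE_measure_pmf_iff)
  have "A \<subseteq> set_pmf qh"
  proof
    fix z assume "z \<in> A"
    then have "pmf q z > 0" using q(1) by (auto simp: set_pmf_eq')
    then have "pmf qh z > 0" using h \<open>z \<in> A\<close> by simp
    then show "z \<in> set_pmf qh" by (simp add: set_pmf_eq')
  qed
  then show ?thesis using sub by blast
qed

lemma good_event:
  fixes E :: "'a::euclidean_space \<Rightarrow> nat \<times> nat \<Rightarrow> real"
    and Eh :: "'a \<Rightarrow> nat \<times> nat \<Rightarrow> real"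
  assumes AED: "AED_family m d E" and q: "set_pmf q = attrs m d"
    and T: "T \<subseteq> attrs m d" "T \<noteq> {}" and G: "Good m d T"
    and pz: "set_pmf pz = T"
    and fit: "\<forall>z\<in>T. \<forall>x. aec m d Eh Bh pz z x = posterior m d E pz z x"
    and qh: "\<forall>z\<in>attrs m d. pmf qh z = pmf q z"
    and z: "z \<in> attrs m d"
  shows "crm m d Eh (extrap_bias m d E Eh Bh pz) qh z x = posterior m d E q z x"
proof -
  let ?I = "\<lambda>z v. inner_md m d (sigma z) v"
  let ?Z = "partition_fn m d E"
  let ?cd = "cond_dens m d E"
  have finT: "finite T" using T(1) finite_attrs finite_subset by blast
  have Zpos: "\<And>z. z \<in> attrs m d \<Longrightarrow> ?Z z > 0" using partition_pos[OF AED] by blast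
  have cdpos: "\<And>z x. z \<in> attrs m d \<Longrightarrow> ?cd z x > 0"
    using Zpos by (simp add: cond_dens_def)
  have pzpos: "\<And>z. z \<in> T \<Longrightarrow> pmf pz z > 0" using pz by (auto simp: set_pmf_eq')
  define px where "px x = marginal m d E pz x" for x
  have pxpos: "px x > 0" for x
    unfolding px_def marginal_def pz
    by (rule sum_pos[OF finT T(2)]) (use pzpos cdpos T(1) in auto)
  define Sx where "Sx x = (\<Sum>z'\<in>set_pmf pz. aec_term m d Eh Bh pz z' x)" for x
  have Sxpos: "Sx x > 0" for x
    unfolding Sx_def pz by (rule sum_pos[OF finT T(2)]) (simp add: aec_term_def)
  define g where "g x = ln (Sx x / px x)" for x
  have expg: "exp (g x) = Sx x / px x" for x
    unfolding g_def using Sxpos pxpos by simp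
  have key: "?I z (Eh x) - ?I z (E x) + g x = ln (?Z z) - Bh z" if zT: "z \<in> T" for z x
  proof -
    have za: "z \<in> attrs m d" using zT T(1) by auto
    have p0: "pmf pz z > 0" using pzpos zT by simp
    have at: "aec_term m d Eh Bh pz z x = exp (- ?I z (Eh x)) * pmf pz z * exp (- Bh z)"
      unfolding aec_term_def using p0 by (simp add: exp_add exp_diff exp_minus field_simps)
    have "aec m d Eh Bh pz z x = posterior m d E pz z x" using fit zT by blast
    then have "exp (- ?I z (Eh x)) * pmf pz z * exp (- Bh z) / Sx x
             = pmf pz z * (exp (- ?I z (E x)) / ?Z z) / px x"
      unfolding aec_def posterior_def px_def Sx_def[symmetric] at cond_dens_def by simp
    then have "exp (- ?I z (Eh x)) = exp (- ?I z (E x)) * exp (g x) * exp (Bh z) / ?Z z"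
      using p0 Sxpos[of x] pxpos[of x] Zpos[OF za] unfolding expg
      by (simp add: field_simps exp_minus)
    also have "\<dots> = exp (- ?I z (E x) + g x + Bh z - ln (?Z z))"
      using Zpos[OF za] by (simp add: exp_add exp_diff exp_minus field_simps)
    finally have "- ?I z (Eh x) = - ?I z (E x) + g x + Bh z - ln (?Z z)" by simp
    then show ?thesis by simp
  qed
  \<comment> \<open>extrapolation via the affine span condition\<close>
  define kap where "kap z = ?I z (Eh 0) - ?I z (E 0) + g 0" for z
  have ext: "?I z (Eh x) = ?I z (E x) - g x + kap z" if za: "z \<in> attrs m d" for z x
  proof -
    let ?v = "\<lambda>p. (Eh x p - E x p) - (Eh 0 p - E 0 p)"
    let ?t = "g x - g 0"
    have "\<forall>z\<in>T. ?I z ?v + ?t = 0"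
    proof
      fix z assume "z \<in> T"
      then show "?I z ?v + ?t = 0" using key[of z x] key[of z 0] by (simp add: inner_diff)
    qed
    then have "?I z ?v + ?t = 0" using G za unfolding Good_def by blast
    then show ?thesis unfolding kap_def by (simp add: inner_diff)
  qed
  have Bstar: "extrap_bias m d E Eh Bh pz z = ln (?Z z) - kap z" if za: "z \<in> attrs m d" for z
  proof -
    have pw: "marginal m d E pz x * (exp (- ?I z (Eh x)) / Sx x) = exp (- ?I z (E x)) * exp (- kap z)" for x
    proof -
      have "exp (- ?I z (Eh x)) = exp (- ?I z (E x)) * exp (g x) * exp (- kap z)"
        unfolding ext[OF za] by (simp add: exp_add exp_diff exp_minus field_simps)
      then show ?thesis using Sxpos[of x] pxpos[of x] unfolding expg px_def[symmetric]
        by (simp add: field_simps)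
    qed
    have "extrap_bias m d E Eh Bh pz z = ln (\<integral>x. exp (- ?I z (E x)) * exp (- kap z) \<partial>lborel)"
      unfolding extrap_bias_def Sx_def[symmetric] pw by simp
    also have "(\<integral>x. exp (- ?I z (E x)) * exp (- kap z) \<partial>lborel) = ?Z z * exp (- kap z)"
      unfolding partition_fn_def by simp
    also have "ln (?Z z * exp (- kap z)) = ln (?Z z) - kap z"
      using Zpos[OF za] by (simp add: ln_mult)
    finally show ?thesis .
  qed
  have sqh: "set_pmf qh = attrs m d" by (rule set_pmf_qh[OF q finite_attrs qh])
  have qpos: "\<And>z. z \<in> attrs m d \<Longrightarrow> pmf q z > 0" using q by (auto simp: set_pmf_eq')
  have ct: "crm_term m d Eh (extrap_bias m d E Eh Bh pz) qh z' x = exp (g x) * (pmf q z' * ?cd z' x)"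
    if za: "z' \<in> attrs m d" for z'
  proof -
    have "crm_term m d Eh (extrap_bias m d E Eh Bh pz) qh z' x
        = exp (- ?I z' (E x) + g x - kap z' + ln (pmf q z') - (ln (?Z z') - kap z'))"
      unfolding crm_term_def Bstar[OF za] ext[OF za] using qh za by simp
    also have "\<dots> = exp (g x) * (pmf q z' * (exp (- ?I z' (E x)) / ?Z z'))"
      using qpos[OF za] Zpos[OF za] by (simp add: exp_add exp_diff exp_minus field_simps)
    finally show ?thesis unfolding cond_dens_def .
  qed
  have "crm m d Eh (extrap_bias m d E Eh Bh pz) qh z x
      = exp (g x) * (pmf q z * ?cd z x) / (\<Sum>z'\<in>attrs m d. exp (g x) * (pmf q z' * ?cd z' x))"
    unfolding crm_def sqh using ct z by (simp cong: sum.cong)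
  also have "\<dots> = pmf q z * ?cd z x / (\<Sum>z'\<in>attrs m d. pmf q z' * ?cd z' x)"
    by (simp add: sum_distrib_left[symmetric])
  also have "\<dots> = posterior m d E q z x" unfolding posterior_def marginal_def q ..
  finally show ?thesis .
qed

lemma bad_total:
  assumes m: "m \<ge> 1" and d: "d \<ge> 2" and s1: "s \<ge> m * d" and s2: "real s \<ge> 2 * real d * ln (real d)"
  shows "real (card {w\<in>draws m d s. \<not> Good m d (set w)})
      \<le> (real d ^ m) ^ s * ((1/2) ^ (m * d) + ((1 + real d powr (-3/2)) ^ (m * d) - 1)
           + (8 * real m) ^ (m * d + 1) * (1 - 1 / (8 * real m)) ^ s)"
proof -
  let ?SA = "{S. S \<subseteq> {..<m} \<times> {1..d} \<and> 4 * card S \<le> d}"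
  let ?SB = "{S. S \<subseteq> {..<m} \<times> {1..d} \<and> S \<noteq> {} \<and> 4 * card S \<le> d}"
  let ?RR = "{R. R \<subseteq> {..<s} \<and> card R \<le> m * d + 1}"
  let ?BA = "\<Union>S\<in>?SA. {w\<in>draws m d s. \<forall>z\<in>set w. hits m S z}"
  let ?BB = "\<Union>S\<in>?SB. {w\<in>draws m d s. \<forall>z\<in>set w. \<not> once m S z}"
  let ?BC = "\<Union>R\<in>?RR. Cset m d s R"
  have sub: "{w\<in>draws m d s. \<not> Good m d (set w)} \<subseteq> ?BA \<union> ?BB \<union> ?BC"
  proof
    fix w assume w: "w \<in> {w\<in>draws m d s. \<not> Good m d (set w)}"
    then have wd: "w \<in> draws m d s" and ng: "\<not> Good m d (set w)" by auto
    have T: "set w \<subseteq> attrs m d" using wd by (auto simp: draws_def)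
    have d1: "d \<ge> 1" using d by simp
    from bad_cases[OF m d1 T ng] show "w \<in> ?BA \<union> ?BB \<union> ?BC"
    proof (elim disjE exE conjE)
      fix S assume "S \<subseteq> {..<m} \<times> {1..d}" "4 * card S \<le> d" "\<forall>z\<in>set w. hits m S z"
      then have "w \<in> ?BA" using wd by blast
      then show ?thesis by blast
    next
      fix S assume "S \<subseteq> {..<m} \<times> {1..d}" "S \<noteq> {}" "4 * card S \<le> d" "\<forall>z\<in>set w. \<not> once m S z"
      then have "w \<in> ?BB" using wd by blast
      then show ?thesis by blast
    next
      fix v t assume vt: "\<forall>z\<in>set w. inner_md m d (sigma z) v + t = 0"
        "real (card (Zset m d v t)) \<le> (1 - 1 / (4 * real m)) * real d ^ m"
      note cv = cover_C[OF wd vt]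
      have "succ m d w \<in> ?RR" using cv(2,3) by simp
      then have "w \<in> ?BC" using cv(1) by blast
      then show ?thesis by blast
    qed
  qed
  have finBC: "finite ?BC"
    by (rule finite_subset[OF _ finite_draws[of m d s]]) (use Cset_sub_draws in blast)
  have finBA: "finite ?BA" by (rule finite_subset[OF _ finite_draws[of m d s]]) blast
  have finBB: "finite ?BB" by (rule finite_subset[OF _ finite_draws[of m d s]]) blast
  have "card {w\<in>draws m d s. \<not> Good m d (set w)} \<le> card (?BA \<union> ?BB \<union> ?BC)"
    by (rule card_mono[OF _ sub]) (use finBA finBB finBC in simp)
  also have "\<dots> \<le> card ?BA + card ?BB + card ?BC"
    by (meson add_le_mono1 card_Un_le order_trans)
  finally have "real (card {w\<in>draws m d s. \<not> Good m d (set w)}) \<le> real (card ?BA) + real (card ?BB) + real (card ?BC)"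
    by linarith
  also have "\<dots> \<le> (real d ^ m) ^ s * (1/2) ^ (m * d)
      + (real d ^ m) ^ s * ((1 + real d powr (-3/2)) ^ (m * d) - 1)
      + (real d ^ m) ^ s * ((8 * real m) ^ (m * d + 1) * (1 - 1 / (8 * real m)) ^ s)"
    using bound_A[OF m _ s1] bound_B[OF m d s2] bound_C[OF m, where s=s and d=d] d
    by (intro add_mono) auto
  finally show ?thesis by (simp add: algebra_simps)
qed

lemma eps_conv:
  assumes m: "m \<ge> 1" and d: "d \<ge> 2" and s1: "s \<ge> m * d" and s2: "real s \<ge> 2 * real d * ln (real d)"
  shows "(1/2) ^ (m * d) + ((1 + real d powr (-3/2)) ^ (m * d) - 1)
           + (8 * real m) ^ (m * d + 1) * (1 - 1 / (8 * real m)) ^ s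
       \<le> (1/2) ^ d + (exp (real m * real d powr (-1/2)) - 1)
          + exp ((real m * real d + 1) * ln (8 * real m) - real d * ln (real d) / (4 * real m))"
proof -
  have dpos: "real d > 0" using d by simp
  have mpos: "real m > 0" using m by simp
  have e1: "(1/2::real) ^ (m * d) \<le> (1/2) ^ d"
    using m by (intro power_decreasing) auto
  have e2: "(1 + real d powr (-3/2)) ^ (m * d) \<le> exp (real m * real d powr (-1/2))"
  proof -
    have "(1 + real d powr (-3/2)) ^ (m * d) \<le> exp (real d powr (-3/2)) ^ (m * d)"
      by (intro power_mono) (use exp_ge_add_one_self[of "real d powr (-3/2)"] in auto)
    also have "\<dots> = exp (real (m * d) * real d powr (-3/2))" by (simp add: exp_of_nat_mult[symmetric])
    also have "real (m * d) * real d powr (-3/2) = real m * (real d powr 1 * real d powr (-3/2))"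
      using dpos by simp
    also have "real d powr 1 * real d powr (-3/2) = real d powr (-1/2)"
      by (subst powr_add[symmetric]) simp
    finally show ?thesis .
  qed
  have e3: "(8 * real m) ^ (m * d + 1) * (1 - 1 / (8 * real m)) ^ s
      \<le> exp ((real m * real d + 1) * ln (8 * real m) - real d * ln (real d) / (4 * real m))"
  proof -
    have a: "(8 * real m) ^ (m * d + 1) = exp ((real m * real d + 1) * ln (8 * real m))"
    proof -
      have "(8 * real m) ^ (m * d + 1) = exp (ln ((8 * real m) ^ (m * d + 1)))" using mpos by simp
      also have "ln ((8 * real m) ^ (m * d + 1)) = real (m * d + 1) * ln (8 * real m)"
        using mpos by (intro ln_realpow)
      also have "real (m * d + 1) = real m * real d + 1" by simp
      finally show ?thesis .
    qed
    have b0: "0 \<le> 1 - 1 / (8 * real m)" using m by (simp add: field_simps)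
    have "(1 - 1 / (8 * real m)) ^ s \<le> exp (- (1 / (8 * real m))) ^ s"
      by (intro power_mono b0) (metis exp_ge_add_one_self add.commute diff_conv_add_uminus)
    also have "\<dots> = exp (- (real s / (8 * real m)))" by (simp add: exp_of_nat_mult[symmetric])
    also have "\<dots> \<le> exp (- (real d * ln (real d) / (4 * real m)))"
      using s2 mpos by (simp add: field_simps)
    finally have b: "(1 - 1 / (8 * real m)) ^ s \<le> exp (- (real d * ln (real d) / (4 * real m)))" .
    have "(8 * real m) ^ (m * d + 1) * (1 - 1 / (8 * real m)) ^ s
        \<le> exp ((real m * real d + 1) * ln (8 * real m)) * exp (- (real d * ln (real d) / (4 * real m)))"
      unfolding a by (intro mult_left_mono b) simp
    also have "\<dots> = exp ((real m * real d + 1) * ln (8 * real m) - real d * ln (real d) / (4 * real m))"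
      by (simp add: exp_add[symmetric])
    finally show ?thesis .
  qed
  show ?thesis using e1 e2 e3 by linarith
qed

lemma prob_good:
  assumes s: "s \<ge> 1"
    and AED: "AED_family m d E" and q: "set_pmf q = attrs m d"
  shows "measure_pmf.prob (pmf_of_set (draws m d s))
         {\<omega>. \<forall>pz::nat list pmf. set_pmf pz = set \<omega> \<longrightarrow>
              (\<forall>(Eh::'a::euclidean_space \<Rightarrow> nat \<times> nat \<Rightarrow> real) (Bh::nat list \<Rightarrow> real).
                 (\<forall>z\<in>set \<omega>. \<forall>x. aec m d Eh Bh pz z x = posterior m d E pz z x) \<longrightarrow>
                 (\<forall>qh::nat list pmf. (\<forall>z\<in>attrs m d. pmf qh z = pmf q z) \<longrightarrow>
                    (\<forall>z\<in>attrs m d. \<forall>x.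
                       crm m d Eh (extrap_bias m d E Eh Bh pz) qh z x = posterior m d E q z x)))}
       \<ge> 1 - real (card {w\<in>draws m d s. \<not> Good m d (set w)}) / real (card (draws m d s))"
proof -
  let ?Ev = "{\<omega>. \<forall>pz::nat list pmf. set_pmf pz = set \<omega> \<longrightarrow>
              (\<forall>(Eh::'a::euclidean_space \<Rightarrow> nat \<times> nat \<Rightarrow> real) (Bh::nat list \<Rightarrow> real).
                 (\<forall>z\<in>set \<omega>. \<forall>x. aec m d Eh Bh pz z x = posterior m d E pz z x) \<longrightarrow>
                 (\<forall>qh::nat list pmf. (\<forall>z\<in>attrs m d. pmf qh z = pmf q z) \<longrightarrow>
                    (\<forall>z\<in>attrs m d. \<forall>x.
                       crm m d Eh (extrap_bias m d E Eh Bh pz) qh z x = posterior m d E q z x)))}"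
  let ?D = "draws m d s"
  have finD: "finite ?D" by (rule finite_draws)
  have neD: "?D \<noteq> {}"
  proof -
    have "d \<ge> 1 \<or> m = 0 \<or> True" by simp
    show ?thesis
    proof
      assume e: "?D = {}"
      have "card ?D = (d ^ m) ^ s" by (rule card_draws)
      then have "(d ^ m) ^ s = 0" using e by simp
      then have "d = 0 \<and> m \<ge> 1" using s by (simp add: power_eq_0_iff)
      then have "card (attrs m d) = 0" using card_attrs[of m d] by simp
      then have "attrs m d = {}" using finite_attrs[of m d] by simp
      then have "set_pmf q = {}" using q by simp
      then show False using set_pmf_not_empty[of q] by simp
    qed
  qed
  have sub: "{w\<in>?D. Good m d (set w)} \<subseteq> ?D \<inter> ?Ev"
  proof
    fix w assume w: "w \<in> {w\<in>?D. Good m d (set w)}"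
    then have T: "set w \<subseteq> attrs m d" "set w \<noteq> {}" "Good m d (set w)" using s
      by (auto simp: draws_def)
    have "w \<in> ?Ev"
      using good_event[OF AED q T(1) T(2) T(3)] by blast
    then show "w \<in> ?D \<inter> ?Ev" using w by simp
  qed
  have part: "card {w\<in>?D. Good m d (set w)} + card {w\<in>?D. \<not> Good m d (set w)} = card ?D"
  proof -
    have "card ({w\<in>?D. Good m d (set w)} \<union> {w\<in>?D. \<not> Good m d (set w)})
        = card {w\<in>?D. Good m d (set w)} + card {w\<in>?D. \<not> Good m d (set w)}"
      by (rule card_Un_disjoint) (use finD in auto)
    moreover have "{w\<in>?D. Good m d (set w)} \<union> {w\<in>?D. \<not> Good m d (set w)} = ?D" by auto
    ultimately show ?thesis by simp
  qed
  have cpos: "real (card ?D) > 0" using finD neD by (simp add: card_gt_0_iff)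
  have "1 - real (card {w\<in>?D. \<not> Good m d (set w)}) / real (card ?D)
      = real (card {w\<in>?D. Good m d (set w)}) / real (card ?D)"
    using part cpos by (simp add: field_simps flip: of_nat_add)
  also have "\<dots> \<le> real (card (?D \<inter> ?Ev)) / real (card ?D)"
    using cpos by (intro divide_right_mono) (auto intro!: card_mono[OF _ sub] simp: finD)
  also have "\<dots> = measure_pmf.prob (pmf_of_set ?D) ?Ev"
    by (rule measure_pmf_of_set[OF neD finD, symmetric])
  finally show ?thesis .
qed

lemma asymp_eps:
  fixes m :: nat and c :: real
  assumes m: "m \<ge> 1" and c: "c > 0"
  shows "\<exists>D::nat. \<forall>d\<ge>D. (1/2) ^ d + (exp (real m * real d powr (-1/2)) - 1)
          + exp ((real m * real d + 1) * ln (8 * real m) - real d * ln (real d) / (4 * real m)) < 1 / c"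
proof -
  define mm where "mm = real m"
  have mm: "mm > 0" using m by (simp add: mm_def)
  have l1: "((\<lambda>x::real. (1/2) powr x) \<longlongrightarrow> 0) at_top" by real_asymp
  have l2: "((\<lambda>x::real. exp (mm * x powr (-1/2)) - 1) \<longlongrightarrow> 0) at_top" using mm by real_asymp
  have l3: "((\<lambda>x::real. exp ((mm * x + 1) * ln (8 * mm) - x * ln x / (4 * mm))) \<longlongrightarrow> 0) at_top"
    using mm by real_asymp
  have "((\<lambda>x::real. (1/2) powr x + (exp (mm * x powr (-1/2)) - 1)
          + exp ((mm * x + 1) * ln (8 * mm) - x * ln x / (4 * mm))) \<longlongrightarrow> 0 + 0 + 0) at_top"
    by (intro tendsto_add l1 l2 l3)
  then have "((\<lambda>d::nat. (1/2) powr real d + (exp (mm * real d powr (-1/2)) - 1)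
          + exp ((mm * real d + 1) * ln (8 * mm) - real d * ln (real d) / (4 * mm))) \<longlongrightarrow> 0) sequentially"
    using filterlim_compose filterlim_real_sequentially by fastforce
  moreover have "1 / c > 0" using c by simp
  ultimately have "eventually (\<lambda>d::nat. (1/2) powr real d + (exp (mm * real d powr (-1/2)) - 1)
          + exp ((mm * real d + 1) * ln (8 * mm) - real d * ln (real d) / (4 * mm)) < 1 / c) sequentially"
    by (rule order_tendstoD)
  then obtain D where D: "\<And>d. d \<ge> D \<Longrightarrow> (1/2) powr real d + (exp (mm * real d powr (-1/2)) - 1)
          + exp ((mm * real d + 1) * ln (8 * mm) - real d * ln (real d) / (4 * mm)) < 1 / c"
    unfolding eventually_sequentially by blast
  show ?thesis
  proof (intro exI allI impI)
    fix d assume "d \<ge> D"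
    moreover have "(1/2::real) powr real d = (1/2) ^ d" by (simp add: powr_realpow)
    ultimately show "(1/2) ^ d + (exp (real m * real d powr (-1/2)) - 1)
          + exp ((real m * real d + 1) * ln (8 * real m) - real d * ln (real d) / (4 * real m)) < 1 / c"
      using D[of d] unfolding mm_def by simp
  qed
qed

theorem theorem3:
  shows "\<forall>(m::nat) (c::real). c > 0 \<longrightarrow>
    (\<exists>D::nat. \<forall>d\<ge>D. \<forall>(s::nat) (E::real^'n \<Rightarrow> nat \<times> nat \<Rightarrow> real) (q::nat list pmf).
       AED_family m d E \<longrightarrow>
       set_pmf q = attrs m d \<longrightarrow>
       real s \<ge> 2 * c * (real m * real d + real d * ln (real d)) \<longrightarrow>
       measure_pmf.prob (pmf_of_set (draws m d s))
         {\<omega>. \<forall>pz::nat list pmf. set_pmf pz = set \<omega> \<longrightarrow>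
              (\<forall>(Eh::real^'n \<Rightarrow> nat \<times> nat \<Rightarrow> real) (Bh::nat list \<Rightarrow> real).
                 (\<forall>z\<in>set \<omega>. \<forall>x. aec m d Eh Bh pz z x = posterior m d E pz z x) \<longrightarrow>
                 (\<forall>qh::nat list pmf. (\<forall>z\<in>attrs m d. pmf qh z = pmf q z) \<longrightarrow>
                    (\<forall>z\<in>attrs m d. \<forall>x.
                       crm m d Eh (extrap_bias m d E Eh Bh pz) qh z x = posterior m d E q z x)))}
         > 1 - 1 / c)"
proof (intro allI impI)
  fix m :: nat and c :: real
  assume c: "c > 0"
  show "\<exists>D::nat. \<forall>d\<ge>D. \<forall>(s::nat) (E::real^'n \<Rightarrow> nat \<times> nat \<Rightarrow> real) (q::nat list pmf).
       AED_family m d E \<longrightarrow>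
       set_pmf q = attrs m d \<longrightarrow>
       real s \<ge> 2 * c * (real m * real d + real d * ln (real d)) \<longrightarrow>
       measure_pmf.prob (pmf_of_set (draws m d s))
         {\<omega>. \<forall>pz::nat list pmf. set_pmf pz = set \<omega> \<longrightarrow>
              (\<forall>(Eh::real^'n \<Rightarrow> nat \<times> nat \<Rightarrow> real) (Bh::nat list \<Rightarrow> real).
                 (\<forall>z\<in>set \<omega>. \<forall>x. aec m d Eh Bh pz z x = posterior m d E pz z x) \<longrightarrow>
                 (\<forall>qh::nat list pmf. (\<forall>z\<in>attrs m d. pmf qh z = pmf q z) \<longrightarrow>
                    (\<forall>z\<in>attrs m d. \<forall>x.
                       crm m d Eh (extrap_bias m d E Eh Bh pz) qh z x = posterior m d E q z x)))}
         > 1 - 1 / c"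
  proof (cases "m = 0")
    case True
    show ?thesis
    proof (intro exI[of _ 2] allI impI)
      fix d s and E :: "real^'n \<Rightarrow> nat \<times> nat \<Rightarrow> real" and q :: "nat list pmf"
      assume d: "d \<ge> 2" and AED: "AED_family m d E" and q: "set_pmf q = attrs m d"
        and sb: "real s \<ge> 2 * c * (real m * real d + real d * ln (real d))"
      have "ln (real d) > 0" using d by simp
      then have "2 * c * (real m * real d + real d * ln (real d)) > 0" using c d True by simp
      then have s1: "s \<ge> 1" using sb by linarith
      have nobad: "{w\<in>draws m d s. \<not> Good m d (set w)} = {}"
      proof -
        have "Good m d (set w)" if w: "w \<in> draws m d s" for w
        proof -
          have lw: "length w = s" and sw: "set w \<subseteq> attrs m d" using w by (auto simp: draws_def)
          have "w \<noteq> []" using lw s1 by auto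
          then obtain z0 where z0: "z0 \<in> set w" by (cases w) auto
          have "attrs m d = {[]}" using True by (auto simp: attrs_def)
          then have "attrs m d \<subseteq> set w" using z0 sw by auto
          then show ?thesis unfolding Good_def by blast
        qed
        then show ?thesis by blast
      qed
      have "1 - real (card {w\<in>draws m d s. \<not> Good m d (set w)}) / real (card (draws m d s)) = 1"
        unfolding nobad by simp
      moreover have "1 - 1 / c < 1" using c by simp
      ultimately show "1 - 1 / c < measure_pmf.prob (pmf_of_set (draws m d s))
         {\<omega>. \<forall>pz::nat list pmf. set_pmf pz = set \<omega> \<longrightarrow>
              (\<forall>(Eh::real^'n \<Rightarrow> nat \<times> nat \<Rightarrow> real) (Bh::nat list \<Rightarrow> real).
                 (\<forall>z\<in>set \<omega>. \<forall>x. aec m d Eh Bh pz z x = posterior m d E pz z x) \<longrightarrow>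
                 (\<forall>qh::nat list pmf. (\<forall>z\<in>attrs m d. pmf qh z = pmf q z) \<longrightarrow>
                    (\<forall>z\<in>attrs m d. \<forall>x.
                       crm m d Eh (extrap_bias m d E Eh Bh pz) qh z x = posterior m d E q z x)))}"
        using prob_good[OF s1 AED q] by linarith
    qed
  next
    case False
    then have m: "m \<ge> 1" by simp
    obtain D0 where D0: "\<And>d. d \<ge> D0 \<Longrightarrow> (1/2) ^ d + (exp (real m * real d powr (-1/2)) - 1)
          + exp ((real m * real d + 1) * ln (8 * real m) - real d * ln (real d) / (4 * real m)) < 1 / max c 1"
    proof -
      have "max c 1 > 0" by simp
      from asymp_eps[OF m this] obtain D0 where
        "\<forall>d\<ge>D0. (1/2) ^ d + (exp (real m * real d powr (-1/2)) - 1)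
          + exp ((real m * real d + 1) * ln (8 * real m) - real d * ln (real d) / (4 * real m)) < 1 / max c 1"
        by blast
      then show ?thesis using that by blast
    qed
    show ?thesis
    proof (intro exI[of _ "max D0 2"] allI impI)
      fix d s and E :: "real^'n \<Rightarrow> nat \<times> nat \<Rightarrow> real" and q :: "nat list pmf"
      assume d: "d \<ge> max D0 2" and AED: "AED_family m d E" and q: "set_pmf q = attrs m d"
        and sb: "real s \<ge> 2 * c * (real m * real d + real d * ln (real d))"
      let ?P = "measure_pmf.prob (pmf_of_set (draws m d s))
         {\<omega>. \<forall>pz::nat list pmf. set_pmf pz = set \<omega> \<longrightarrow>
              (\<forall>(Eh::real^'n \<Rightarrow> nat \<times> nat \<Rightarrow> real) (Bh::nat list \<Rightarrow> real).
                 (\<forall>z\<in>set \<omega>. \<forall>x. aec m d Eh Bh pz z x = posterior m d E pz z x) \<longrightarrow>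
                 (\<forall>qh::nat list pmf. (\<forall>z\<in>attrs m d. pmf qh z = pmf q z) \<longrightarrow>
                    (\<forall>z\<in>attrs m d. \<forall>x.
                       crm m d Eh (extrap_bias m d E Eh Bh pz) qh z x = posterior m d E q z x)))}"
      have d2: "d \<ge> 2" and dD: "d \<ge> D0" using d by auto
      show "?P > 1 - 1 / c"
      proof (cases "c < 1")
        case True
        have "1 - 1 / c < 0" using True c by (simp add: field_simps)
        moreover have "?P \<ge> 0" by simp
        ultimately show ?thesis by linarith
      next
        case False
        then have c1: "c \<ge> 1" by simp
        have lnd: "ln (real d) \<ge> 0" using d2 by simp
        have base: "real m * real d + real d * ln (real d) \<ge> 0" using lnd by simp
        have "2 * (real m * real d + real d * ln (real d)) \<le> 2 * c * (real m * real d + real d * ln (real d))"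
          using mult_right_mono[OF c1 base] by simp
        then have s0: "real s \<ge> 2 * (real m * real d + real d * ln (real d))" using sb by linarith
        have md0: "0 \<le> real m * real d" by simp
        have s2: "real s \<ge> 2 * real d * ln (real d)"
        proof -
          have gen2: "\<And>X Y S::real. 2 * (Y + X) \<le> S \<Longrightarrow> 0 \<le> Y \<Longrightarrow> 2 * X \<le> S" by (smt (verit))
          have "2 * (real d * ln (real d)) \<le> real s" using gen2[OF s0 md0] .
          then show ?thesis by simp
        qed
        have dl0: "0 \<le> real d * ln (real d)" using lnd by simp
        have gen: "\<And>X Y S::real. 2 * (Y + X) \<le> S \<Longrightarrow> 0 \<le> X \<Longrightarrow> 0 \<le> Y \<Longrightarrow> Y \<le> S"
          by (smt (verit))
        have "real m * real d \<le> real s" using gen[OF s0 dl0 md0] .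
        then have "real (m * d) \<le> real s" by simp
        then have s1: "s \<ge> m * d" by (simp only: of_nat_le_iff)
        have "1 * 1 \<le> m * d" by (rule mult_le_mono) (use m d2 in auto)
        then have sge1: "s \<ge> 1" using s1 by linarith
        let ?M = "real d ^ m"
        have Mpos: "?M ^ s > 0" using d2 by simp
        have bad: "real (card {w\<in>draws m d s. \<not> Good m d (set w)})
            \<le> ?M ^ s * ((1/2) ^ (m * d) + ((1 + real d powr (-3/2)) ^ (m * d) - 1)
           + (8 * real m) ^ (m * d + 1) * (1 - 1 / (8 * real m)) ^ s)"
          by (rule bad_total[OF m d2 s1 s2])
        also have "\<dots> \<le> ?M ^ s * ((1/2) ^ d + (exp (real m * real d powr (-1/2)) - 1)
          + exp ((real m * real d + 1) * ln (8 * real m) - real d * ln (real d) / (4 * real m)))"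
          by (intro mult_left_mono eps_conv[OF m d2 s1 s2]) simp
        also have "\<dots> < ?M ^ s * (1 / c)"
          using D0[OF dD] c1 Mpos by (intro mult_strict_left_mono) auto
        finally have b: "real (card {w\<in>draws m d s. \<not> Good m d (set w)}) < ?M ^ s * (1 / c)" .
        have cd: "real (card (draws m d s)) = ?M ^ s" by (simp add: card_draws)
        have "real (card {w\<in>draws m d s. \<not> Good m d (set w)}) / real (card (draws m d s)) < 1 / c"
          unfolding cd using b Mpos by (simp add: divide_less_eq mult.commute)
        moreover have "?P \<ge> 1 - real (card {w\<in>draws m d s. \<not> Good m d (set w)}) / real (card (draws m d s))"
          by (rule prob_good[OF sge1 AED q])
        ultimately show ?thesis by linarith
      qed
    qed
  qed
qed

end
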